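(* Let $K$ be a positive braid knot, i.e. a knot in $S^3$ which is the closure of a braid word in the standard generators $\sigma_1,\ldots,\sigma_{p-1}$ of the braid group on $p$ strands involving only positive powers of the generators. Then the first Khovanov homology group of $K$ vanishes: $\mathcal{H}^1(K)=0$ (in every quantum grading).
   Context: $\mathcal{H}^{i,j}(K)$ denotes Khovanov homology (with $\mathbb{Z}$ coefficients) of $K$, the categorification of the Jones polynomial: for a diagram $D$ with $m$ ordered crossings, one forms the cube of resolutions, assigns to each complete resolution $D_\epsilon$, $\epsilon\in\{0,1\}^m$, the tensor product of copies of $V=\mathbb{Z}\langle 1,X\rangle$ ($\deg 1=1$, $\deg X=-1$) over its circles, sets $C^i(D)=\bigoplus_{|\epsilon|=i}M_\epsilon\{i\}$, with differential the signed sum of edge maps given by the multiplication $m(1\otimes1)=1$, $m(1\otimes X)=m(X\otimes 1)=X$, $m(X\otimes X)=0$ and comultiplication $\Delta(1)=1\otimes X+X\otimes 1$, $\Delta(X)=X\otimes X$; the invariant complex is $C(D)[-n_-]\{n_+-2n_-\}$, where $n_\pm$ are the numbers of positive/negative crossings, and $\mathcal{H}^i(K)$ is its homology in homological degree $i$. With these conventions a diagram with only positive crossings has no homological shift. *)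

theory Defs
  imports Main
begin

text \<open>
A braid word on p strands is a list w of generator indices i (1 \<le> i < p),
entry w!k standing for sigma_i (positive powers only).  Crossing k (k < length w)
sits between level k and level k+1; strands are numbered 1..p.  Vertices of the
diagram are (level, strand) with level in 0..length w; level length w is glued
to level 0 (braid closure).  At each crossing the local picture is given by a
mode: 0 = 0-smoothing (oriented resolution of a positive crossing),
1 = 1-smoothing, 2 = the crossing itself (used to count link components).
\<close>

definition crossing_edges :: "nat \<Rightarrow> nat \<Rightarrow> nat \<Rightarrow> nat \<Rightarrow> ((nat \<times> nat) \<times> (nat \<times> nat)) set" where
  "crossing_edges p k i mode =
     {((k, j), (Suc k, j)) | j. j \<in> {1..p} \<and> j \<noteq> i \<and> j \<noteq> Suc i} \<union>
     (if mode = 0 then {((k, i), (Suc k, i)), ((k, Suc i), (Suc k, Suc i))}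
      else if mode = 1 then {((k, i), (k, Suc i)), ((Suc k, i), (Suc k, Suc i))}
      else {((k, i), (Suc k, Suc i)), ((k, Suc i), (Suc k, i))})"

definition diagram_vertices :: "nat \<Rightarrow> nat list \<Rightarrow> (nat \<times> nat) set" where
  "diagram_vertices p w = {0..length w} \<times> {1..p}"

definition diagram_edges :: "nat \<Rightarrow> nat list \<Rightarrow> (nat \<Rightarrow> nat) \<Rightarrow> ((nat \<times> nat) \<times> (nat \<times> nat)) set" where
  "diagram_edges p w mode =
     {((length w, j), (0, j)) | j. j \<in> {1..p}} \<union>
     (\<Union>k<length w. crossing_edges p k (w ! k) (mode k))"

definition components :: "nat \<Rightarrow> nat list \<Rightarrow> (nat \<Rightarrow> nat) \<Rightarrow> (nat \<times> nat) set set" where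
  "components p w mode =
     diagram_vertices p w // ((diagram_edges p w mode \<union> (diagram_edges p w mode)\<inverse>)\<^sup>*)"

definition is_knot_closure :: "nat \<Rightarrow> nat list \<Rightarrow> bool" where
  "is_knot_closure p w \<longleftrightarrow> card (components p w (\<lambda>_. 2)) = 1"

definition circles :: "nat \<Rightarrow> nat list \<Rightarrow> nat set \<Rightarrow> (nat \<times> nat) set set" where
  "circles p w E = components p w (\<lambda>k. if k \<in> E then 1 else 0)"

type_synonym kh_gen = "nat set \<times> (nat \<times> nat) set set"

text \<open>Standard basis of the Khovanov complex: a resolution E together with the set S
of its circles labelled X (the others labelled 1).\<close>
definition kh_gens :: "nat \<Rightarrow> nat list \<Rightarrow> kh_gen set" where
  "kh_gens p w = {(E, S). E \<subseteq> {..<length w} \<and> S \<subseteq> circles p w E}"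

definition hdeg :: "kh_gen \<Rightarrow> nat" where
  "hdeg g = card (fst g)"

text \<open>Quantum degree: deg in V tensor power, plus shift {i}, plus {n_+ - 2 n_-} with
n_+ = length w, n_- = 0 (all crossings positive; no homological shift).\<close>
definition qdeg :: "nat \<Rightarrow> nat list \<Rightarrow> kh_gen \<Rightarrow> int" where
  "qdeg p w g = int (card (circles p w (fst g))) - 2 * int (card (snd g))
                + int (card (fst g)) + int (length w)"

text \<open>Matrix coefficient of the Khovanov differential from g to g' (edge maps m / Delta
with the sign (-1)^(number of 1-smoothed crossings before the changed one)).\<close>
definition edge_coeff :: "nat \<Rightarrow> nat list \<Rightarrow> kh_gen \<Rightarrow> kh_gen \<Rightarrow> int" where
  "edge_coeff p w g g' =
    (let E = fst g; S = snd g; E' = fst g'; S' = snd g';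
         A = circles p w E - circles p w E'; A' = circles p w E' - circles p w E
     in if (\<exists>k. k < length w \<and> k \<notin> E \<and> E' = insert k E) \<and> S - A = S' - A' \<and>
           ((card A = 2 \<and> card A' = 1 \<and>
               ((S \<inter> A = {} \<and> S' \<inter> A' = {}) \<or> (card (S \<inter> A) = 1 \<and> S' \<inter> A' = A'))) \<or>
            (card A = 1 \<and> card A' = 2 \<and>
               ((S \<inter> A = {} \<and> card (S' \<inter> A') = 1) \<or> (S \<inter> A = A \<and> S' \<inter> A' = A'))))
        then (-1) ^ card {j \<in> E. j < Min (E' - E)} else 0)"

definition kh_d :: "nat \<Rightarrow> nat list \<Rightarrow> (kh_gen \<Rightarrow> int) \<Rightarrow> (kh_gen \<Rightarrow> int)" where
  "kh_d p w c = (\<lambda>g'. \<Sum>g\<in>kh_gens p w. edge_coeff p w g g' * c g)"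

definition kh_chain :: "nat \<Rightarrow> nat list \<Rightarrow> nat \<Rightarrow> int \<Rightarrow> (kh_gen \<Rightarrow> int) \<Rightarrow> bool" where
  "kh_chain p w i j c \<longleftrightarrow>
     (\<forall>g. c g \<noteq> 0 \<longrightarrow> g \<in> kh_gens p w \<and> hdeg g = i \<and> qdeg p w g = j)"

definition kh_vanishes :: "nat \<Rightarrow> nat list \<Rightarrow> nat \<Rightarrow> int \<Rightarrow> bool" where
  "kh_vanishes p w i j \<longleftrightarrow>
     (\<forall>c. kh_chain p w i j c \<and> kh_d p w c = (\<lambda>_. 0) \<longrightarrow>
        (\<exists>b. kh_chain p w (i - 1) j b \<and> kh_d p w b = c))"

end

theory Submission
  imports Defs
begin


definition mrg :: "nat \<Rightarrow> nat \<Rightarrow> (nat set \<Rightarrow> int) \<Rightarrow> nat set \<Rightarrow> int" where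
  "mrg x y f T = (if x \<in> T then f T + f (insert y (T - {x})) else f T)"

lemma mrg_shift:
  assumes "q \<noteq> x" "q \<noteq> y"
  shows "mrg x y (\<lambda>T. g (insert q T)) T = mrg x y g (insert q T)"
proof -
  have "insert q (insert y (T - {x})) = insert y (insert q T - {x})" using assms by auto
  then show ?thesis using assms unfolding mrg_def by auto
qed

lemma alg:
  fixes q :: nat
  assumes "G \<subseteq> {1..<q}"
    and far: "\<And>i j T. i \<in> G \<Longrightarrow> j \<in> G \<Longrightarrow> i + 2 \<le> j \<Longrightarrow> T \<subseteq> {1..q} - {i+1, j+1}
              \<Longrightarrow> mrg j (j+1) (a i) T = mrg i (i+1) (a j) T"
    and adj: "\<And>i T. i \<in> G \<Longrightarrow> i + 1 \<in> G \<Longrightarrow> T \<subseteq> {1..q} - {i+1, i+2}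
              \<Longrightarrow> mrg i (i+2) (a i) T = mrg i (i+1) (a (i+1)) T"
  shows "\<exists>f. \<forall>i\<in>G. \<forall>T. T \<subseteq> {1..q} - {i+1} \<longrightarrow> mrg i (i+1) f T = a i T"
  using assms
proof (induction q arbitrary: G a)
  case 0
  then show ?case by auto
next
  case (Suc q0)
  define q where "q = Suc q0"
  define a' where "a' = (\<lambda>i T. a i (insert q T))"
  have far': "mrg j (j+1) (a' i) T = mrg i (i+1) (a' j) T"
    if "i \<in> G" "j \<in> G" "i + 2 \<le> j" "j < q0" "T \<subseteq> {1..q0} - {i+1, j+1}" for i j T
  proof -
    have "mrg j (j+1) (a' i) T = mrg j (j+1) (a i) (insert q T)"
      unfolding a'_def using that q_def by (intro mrg_shift) auto
    also have "\<dots> = mrg i (i+1) (a j) (insert q T)"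
    proof -
      have "insert q T \<subseteq> {1..Suc q0} - {i+1, j+1}" using that q_def by auto
      then show ?thesis using Suc.prems(2)[of i j "insert q T"] that by auto
    qed
    also have "\<dots> = mrg i (i+1) (a' j) T"
      unfolding a'_def using that q_def by (intro mrg_shift[symmetric]) auto
    finally show ?thesis .
  qed
  have adj': "mrg i (i+2) (a' i) T = mrg i (i+1) (a' (i+1)) T"
    if "i \<in> G" "i+1 \<in> G" "i + 1 < q0" "T \<subseteq> {1..q0} - {i+1, i+2}" for i T
  proof -
    have "mrg i (i+2) (a' i) T = mrg i (i+2) (a i) (insert q T)"
      unfolding a'_def using that q_def by (intro mrg_shift) auto
    also have "\<dots> = mrg i (i+1) (a (i+1)) (insert q T)"
    proof -
      have "insert q T \<subseteq> {1..Suc q0} - {i+1, i+2}" using that q_def by auto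
      then show ?thesis using Suc.prems(3)[of i "insert q T"] that by auto
    qed
    also have "\<dots> = mrg i (i+1) (a' (i+1)) T"
      unfolding a'_def using that q_def by (intro mrg_shift[symmetric]) auto
    finally show ?thesis .
  qed
  define G' where "G' = G - {q0}"
  have G': "G' \<subseteq> {1..<q0}" using Suc.prems(1) unfolding G'_def by auto
  have "\<exists>v. \<forall>i\<in>G'. \<forall>T. T \<subseteq> {1..q0} - {i+1} \<longrightarrow> mrg i (i+1) v T = a' i T"
  proof (rule Suc.IH[OF G'])
    fix i j T assume "i \<in> G'" "j \<in> G'" "i + 2 \<le> j" "T \<subseteq> {1..q0} - {i+1, j+1}"
    then show "mrg j (j+1) (a' i) T = mrg i (i+1) (a' j) T" using far' G' unfolding G'_def by auto
  next
    fix i T assume "i \<in> G'" "i + 1 \<in> G'" "T \<subseteq> {1..q0} - {i+1, i+2}"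
    then show "mrg i (i+2) (a' i) T = mrg i (i+1) (a' (i+1)) T" using adj' G' unfolding G'_def by auto
  qed
  then obtain v where v: "\<And>i T. i \<in> G' \<Longrightarrow> T \<subseteq> {1..q0} - {i+1} \<Longrightarrow> mrg i (i+1) v T = a' i T"
    by blast
  show ?case
  proof (cases "q0 \<in> G")
    case True
    define f where "f = (\<lambda>T. if q \<in> T then v (T - {q}) else a q0 T - (if q0 \<in> T then v (T - {q0}) else 0))"
    have fact1: "mrg i (i+1) f T = a i T" if i: "i \<in> G" and T: "T \<subseteq> {1..q} - {i+1}" for i T
    proof (cases "i = q0")
      case True
      then show ?thesis using T unfolding f_def mrg_def q_def by auto
    next
      case False
      then have iG': "i \<in> G'" and iq: "i + 1 < q" using i Suc.prems(1) unfolding G'_def q_def by auto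
      show ?thesis
      proof (cases "q \<in> T")
        case True
        have e1: "insert (i + 1) (T - {i}) - {q} = insert (i+1) ((T - {q}) - {i})" using iq by auto
        have "mrg i (i+1) f T = mrg i (i+1) v (T - {q})"
          using True iq unfolding f_def mrg_def e1 by auto
        also have "\<dots> = a' i (T - {q})"
        proof -
          have "T - {q} \<subseteq> {1..q0} - {i+1}" using T q_def by (auto simp: subset_iff; metis atLeastAtMost_iff le_SucE)
          then show ?thesis using v[OF iG'] by blast
        qed
        also have "\<dots> = a i T" unfolding a'_def using True by (simp add: insert_absorb)
        finally show ?thesis .
      next
        case qT: False
        show ?thesis
        proof (cases "i + 2 \<le> q0")
          case True
          have s1: "mrg i (i+1) f T = mrg i (i+1) (a q0) T
               - (if q0 \<in> T then mrg i (i+1) v (T - {q0}) else 0)"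
          proof -
            have e2: "insert (i + 1) (T - {i}) - {q0} = insert (i+1) ((T - {q0}) - {i})" using True by auto
            show ?thesis using qT True iq unfolding f_def mrg_def e2 q_def by auto
          qed
          have s2: "q0 \<in> T \<Longrightarrow> mrg i (i+1) v (T - {q0}) = a i (insert q (T - {q0}))"
          proof -
            have "T - {q0} \<subseteq> {1..q0} - {i+1}" using T qT q_def by (auto simp: subset_iff; metis atLeastAtMost_iff le_SucE)
            then show "mrg i (i+1) v (T - {q0}) = a i (insert q (T - {q0}))"
              using v[OF iG', of "T - {q0}"] unfolding a'_def by blast
          qed
          have s3: "mrg q0 q (a i) T = mrg i (i+1) (a q0) T"
            using Suc.prems(2)[of i q0 T] i True \<open>q0 \<in> G\<close> T qT q_def by auto
          show ?thesis using s1 s2 s3 unfolding mrg_def by (auto split: if_splits)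
        next
          case False
          then have iq0: "i + 1 = q0" using iq q_def by auto
          have Tq0: "q0 \<notin> T" using T iq0 by auto
          have s3: "mrg i (i+2) (a i) T = mrg i (i+1) (a q0) T"
            using Suc.prems(3)[of i T] i iq0 \<open>q0 \<in> G\<close> T qT q_def by auto
          show ?thesis
          proof (cases "i \<in> T")
            case False
            then show ?thesis using s3 Tq0 qT unfolding f_def mrg_def by auto
          next
            case True
            have vv: "v (T - {i}) = a i (insert q (T - {i}))"
            proof -
              have "T - {i} \<subseteq> {1..q0} - {i+1}" using T qT q_def by (auto simp: subset_iff; metis atLeastAtMost_iff le_SucE)
              then show ?thesis using v[OF iG', of "T - {i}"] unfolding a'_def mrg_def by auto
            qed
            have e3: "insert q0 (T - {i}) - {q0} = T - {i}" using Tq0 by auto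
            have "mrg i (i+1) f T = a q0 T + (a q0 (insert q0 (T - {i})) - v (T - {i}))"
              using True qT Tq0 iq0 q_def unfolding f_def mrg_def e3 by auto
            then show ?thesis using s3 vv True iq0 q_def unfolding mrg_def by auto
          qed
        qed
      qed
    qed
    show ?thesis by (intro exI[of _ f] ballI allI impI fact1; simp add: q_def)
  next
    case False
    have G0: "G \<subseteq> {1..<q0}" using False Suc.prems(1) by (auto simp: subset_iff; metis atLeastLessThan_iff less_SucE)
    have sub: "{1..q0} - X \<subseteq> {1..Suc q0} - X" for X :: "nat set" by auto
    have "\<exists>u. \<forall>i\<in>G. \<forall>T. T \<subseteq> {1..q0} - {i+1} \<longrightarrow> mrg i (i+1) u T = a i T"
    proof (rule Suc.IH[OF G0])
      fix i j T assume "i \<in> G" "j \<in> G" "i + 2 \<le> j" "T \<subseteq> {1..q0} - {i+1, j+1}"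
      then show "mrg j (j+1) (a i) T = mrg i (i+1) (a j) T" using Suc.prems(2) sub by (meson subset_trans)
    next
      fix i T assume "i \<in> G" "i + 1 \<in> G" "T \<subseteq> {1..q0} - {i+1, i+2}"
      then show "mrg i (i+2) (a i) T = mrg i (i+1) (a (i+1)) T" using Suc.prems(3) sub by (meson subset_trans)
    qed
    then obtain u where u: "\<And>i T. i \<in> G \<Longrightarrow> T \<subseteq> {1..q0} - {i+1} \<Longrightarrow> mrg i (i+1) u T = a i T"
      by blast
    define f where "f = (\<lambda>T. if q \<in> T then v (T - {q}) else u T)"
    have fact1: "mrg i (i+1) f T = a i T" if i: "i \<in> G" and T: "T \<subseteq> {1..q} - {i+1}" for i T
    proof -
      have iG': "i \<in> G'" and iq: "i + 1 < q" using i G0 False unfolding G'_def q_def by auto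
      show ?thesis
      proof (cases "q \<in> T")
        case True
        have e1: "insert (i + 1) (T - {i}) - {q} = insert (i+1) ((T - {q}) - {i})" using iq by auto
        have "mrg i (i+1) f T = mrg i (i+1) v (T - {q})"
          using True iq unfolding f_def mrg_def e1 by auto
        also have "\<dots> = a' i (T - {q})"
        proof -
          have "T - {q} \<subseteq> {1..q0} - {i+1}" using T q_def by (auto simp: subset_iff; metis atLeastAtMost_iff le_SucE)
          then show ?thesis using v[OF iG'] by blast
        qed
        also have "\<dots> = a i T" unfolding a'_def using True by (simp add: insert_absorb)
        finally show ?thesis .
      next
        case False
        have "mrg i (i+1) f T = mrg i (i+1) u T" using False iq unfolding f_def mrg_def by auto
        also have "\<dots> = a i T"
        proof -
          have "T \<subseteq> {1..q0} - {i+1}" using T False q_def by (auto simp: subset_iff; metis atLeastAtMost_iff le_SucE)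
          then show ?thesis using u[OF i] by blast
        qed
        finally show ?thesis .
      qed
    qed
    show ?thesis by (intro exI[of _ f] ballI allI impI fact1; simp add: q_def)
  qed
qed


definition rel :: "nat \<Rightarrow> nat list \<Rightarrow> (nat \<Rightarrow> nat) \<Rightarrow> ((nat \<times> nat) \<times> (nat \<times> nat)) set" where
  "rel p w mode = (diagram_edges p w mode \<union> (diagram_edges p w mode)\<inverse>)\<^sup>*"

lemma edge_R: "(x,y) \<in> diagram_edges p w mode \<Longrightarrow> (x,y) \<in> rel p w mode"
  unfolding rel_def by auto

lemma edge_R': "(x,y) \<in> diagram_edges p w mode \<Longrightarrow> (y,x) \<in> rel p w mode"
  unfolding rel_def by auto

lemma rel_trans: "(x,y) \<in> rel p w mode \<Longrightarrow> (y,z) \<in> rel p w mode \<Longrightarrow> (x,z) \<in> rel p w mode"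
  unfolding rel_def by (meson rtrancl_trans)

lemma rel_sym: "(x,y) \<in> rel p w mode \<Longrightarrow> (y,x) \<in> rel p w mode"
proof -
  have "sym (diagram_edges p w mode \<union> (diagram_edges p w mode)\<inverse>)" by (auto simp: sym_def)
  then show "(x,y) \<in> rel p w mode \<Longrightarrow> (y,x) \<in> rel p w mode"
    unfolding rel_def by (meson sym_rtrancl symD)
qed

lemma rel_refl: "(x,x) \<in> rel p w mode" unfolding rel_def by auto

lemma vert_edge:
  assumes "m < length w" "1 \<le> j" "j \<le> p" "mode m = 0 \<or> (j \<noteq> w!m \<and> j \<noteq> Suc (w!m))"
  shows "((m,j),(Suc m,j)) \<in> diagram_edges p w mode"
proof -
  have "((m,j),(Suc m,j)) \<in> crossing_edges p m (w!m) (mode m)"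
    using assms unfolding crossing_edges_def by auto
  then show ?thesis using assms(1) unfolding diagram_edges_def by blast
qed

lemma horiz_edges:
  assumes "m < length w" "mode m = 1"
  shows "((m, w!m),(m, Suc (w!m))) \<in> diagram_edges p w mode"
    "((Suc m, w!m),(Suc m, Suc (w!m))) \<in> diagram_edges p w mode"
proof -
  have "((m, w!m),(m, Suc (w!m))) \<in> crossing_edges p m (w!m) (mode m)"
       "((Suc m, w!m),(Suc m, Suc (w!m))) \<in> crossing_edges p m (w!m) (mode m)"
    using assms unfolding crossing_edges_def by auto
  then show "((m, w!m),(m, Suc (w!m))) \<in> diagram_edges p w mode"
    "((Suc m, w!m),(Suc m, Suc (w!m))) \<in> diagram_edges p w mode"
    using assms(1) unfolding diagram_edges_def by blast+
qed

lemma closure_edge: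
  assumes "1 \<le> j" "j \<le> p"
  shows "((length w, j),(0,j)) \<in> diagram_edges p w mode"
  using assms unfolding diagram_edges_def by auto

lemma vpath:
  assumes "a \<le> b" "b \<le> length w" "1 \<le> j" "j \<le> p"
    "\<forall>m. a \<le> m \<and> m < b \<longrightarrow> mode m = 0 \<or> (j \<noteq> w!m \<and> j \<noteq> Suc (w!m))"
  shows "((a,j),(b,j)) \<in> rel p w mode"
  using assms
proof (induction b)
  case 0
  then show ?case using rel_refl by auto
next
  case (Suc b)
  show ?case
  proof (cases "a = Suc b")
    case True
    then show ?thesis using rel_refl by auto
  next
    case False
    then have "a \<le> b" using Suc.prems by auto
    then have "((a,j),(b,j)) \<in> rel p w mode" using Suc by auto
    moreover have "((b,j),(Suc b,j)) \<in> diagram_edges p w mode"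
      using Suc.prems \<open>a \<le> b\<close> by (intro vert_edge) auto
    ultimately show ?thesis using edge_R rel_trans by blast
  qed
qed

lemma edge_cases:
  assumes "(x,y) \<in> diagram_edges p w mode"
  shows "(\<exists>j. 1 \<le> j \<and> j \<le> p \<and> x = (length w, j) \<and> y = (0,j)) \<or>
         (\<exists>m<length w. (x,y) \<in> crossing_edges p m (w!m) (mode m))"
  using assms unfolding diagram_edges_def by auto

lemma cross_cases:
  assumes "(x,y) \<in> crossing_edges p m i md" "md = 0 \<or> md = 1" "1 \<le> i" "i < p"
  shows "(\<exists>j. 1 \<le> j \<and> j \<le> p \<and> x = (m,j) \<and> y = (Suc m,j) \<and> (md = 0 \<or> (j \<noteq> i \<and> j \<noteq> Suc i)))
       \<or> (md = 1 \<and> (x = (m,i) \<and> y = (m,Suc i) \<or> x = (Suc m,i) \<and> y = (Suc m, Suc i)))"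
  using assms unfolding crossing_edges_def by (auto split: if_splits)

lemma edges_in_V:
  assumes "\<forall>i\<in>set w. 1 \<le> i \<and> i < p" "(x,y) \<in> diagram_edges p w mode" "\<forall>m. mode m = 0 \<or> mode m = 1"
  shows "x \<in> diagram_vertices p w \<and> y \<in> diagram_vertices p w"
proof -
  have "(\<exists>j. 1 \<le> j \<and> j \<le> p \<and> x = (length w, j) \<and> y = (0,j)) \<or>
         (\<exists>m<length w. (x,y) \<in> crossing_edges p m (w!m) (mode m))" using edge_cases[OF assms(2)] .
  then show ?thesis
  proof
    assume "\<exists>m<length w. (x,y) \<in> crossing_edges p m (w!m) (mode m)"
    then obtain m where m: "m < length w" "(x,y) \<in> crossing_edges p m (w!m) (mode m)" by blast
    have "1 \<le> w!m" "w!m < p" using assms(1) m(1) by auto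
    then show ?thesis using cross_cases[OF m(2) _ \<open>1 \<le> w!m\<close> \<open>w!m < p\<close>] assms(3) m(1) unfolding diagram_vertices_def by auto
  qed (auto simp: diagram_vertices_def)
qed

lemma comps_by_cl:
  fixes cl :: "nat \<times> nat \<Rightarrow> (nat \<times> nat) set" and rt :: "nat \<times> nat \<Rightarrow> nat \<times> nat"
  assumes hw: "\<forall>i\<in>set w. 1 \<le> i \<and> i < p" and md: "\<forall>m. mode m = 0 \<or> mode m = 1"
    and E: "\<And>x y. (x,y) \<in> diagram_edges p w mode \<Longrightarrow> cl x = cl y"
    and self: "\<And>x. x \<in> diagram_vertices p w \<Longrightarrow> x \<in> cl x"
    and clV: "\<And>x y. x \<in> diagram_vertices p w \<Longrightarrow> y \<in> cl x \<Longrightarrow> y \<in> diagram_vertices p w \<and> rt y = rt x"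
    and root: "\<And>x. x \<in> diagram_vertices p w \<Longrightarrow> (x, rt x) \<in> rel p w mode"
  shows "components p w mode = cl ` diagram_vertices p w"
proof -
  let ?V = "diagram_vertices p w"
  have key: "rel p w mode `` {x} = cl x" if x: "x \<in> ?V" for x
  proof
    show "rel p w mode `` {x} \<subseteq> cl x"
    proof
      fix y assume "y \<in> rel p w mode `` {x}"
      then have "(x,y) \<in> (diagram_edges p w mode \<union> (diagram_edges p w mode)\<inverse>)\<^sup>*" unfolding rel_def by auto
      then have "y \<in> ?V \<and> cl y = cl x"
      proof (induction rule: rtrancl_induct)
        case base
        then show ?case using x by auto
      next
        case (step y z)
        from step(2) show ?case
        proof
          assume yz: "(y, z) \<in> diagram_edges p w mode"
          show ?thesis using E[OF yz] edges_in_V[OF hw yz md] step(3) by simp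
        next
          assume "(y, z) \<in> (diagram_edges p w mode)\<inverse>"
          then have zy: "(z, y) \<in> diagram_edges p w mode" by simp
          show ?thesis using E[OF zy] edges_in_V[OF hw zy md] step(3) by simp
        qed
      qed
      then show "y \<in> cl x" using self by metis
    qed
  next
    show "cl x \<subseteq> rel p w mode `` {x}"
    proof
      fix y assume y: "y \<in> cl x"
      have "y \<in> ?V" "rt y = rt x" using clV[OF x y] by auto
      then have "(y, rt x) \<in> rel p w mode" using root by metis
      then show "y \<in> rel p w mode `` {x}" using root[OF x] rel_sym rel_trans by blast
    qed
  qed
  show ?thesis unfolding components_def quotient_def using key rel_def
    by (auto simp: image_def)
qed


definition blk :: "nat list \<Rightarrow> nat set \<Rightarrow> (nat \<times> nat) set" where
  "blk w J = {0..length w} \<times> J"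

lemma blk_eq[simp]: "blk w J = blk w J' \<longleftrightarrow> J = J'"
  unfolding blk_def by (metis Sigma_empty2 atLeastAtMost_iff times_eq_iff empty_iff zero_le)

definition md :: "nat set \<Rightarrow> nat \<Rightarrow> nat" where
  "md E = (\<lambda>k. if k \<in> E then 1 else 0)"

lemma md_01: "\<forall>m. md E m = 0 \<or> md E m = 1" unfolding md_def by auto

lemma circles_md: "circles p w E = components p w (md E)"
  unfolding circles_def md_def by simp

lemma img_V: "(\<lambda>x. F (snd x)) ` diagram_vertices p w = F ` {1..p}"
  unfolding diagram_vertices_def by (auto simp: image_def)

context
  fixes p :: nat and w :: "nat list"
  assumes hw: "\<forall>i\<in>set w. 1 \<le> i \<and> i < p"
begin

lemma wk: "k < length w \<Longrightarrow> 1 \<le> w!k \<and> w!k < p"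
  using hw by auto

lemma to_base:
  assumes "a \<le> length w" "1 \<le> j" "j \<le> p"
    "(\<forall>m<a. mode m = 0 \<or> (j \<noteq> w!m \<and> j \<noteq> Suc (w!m))) \<or>
     (\<forall>m. a \<le> m \<and> m < length w \<longrightarrow> mode m = 0 \<or> (j \<noteq> w!m \<and> j \<noteq> Suc (w!m)))"
  shows "((a,j),(0,j)) \<in> rel p w mode"
  using assms(4)
proof
  assume "\<forall>m<a. mode m = 0 \<or> (j \<noteq> w!m \<and> j \<noteq> Suc (w!m))"
  then have "((0,j),(a,j)) \<in> rel p w mode" using assms by (intro vpath) auto
  then show ?thesis using rel_sym by blast
next
  assume "\<forall>m. a \<le> m \<and> m < length w \<longrightarrow> mode m = 0 \<or> (j \<noteq> w!m \<and> j \<noteq> Suc (w!m))"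
  then have "((a,j),(length w,j)) \<in> rel p w mode" using assms by (intro vpath) auto
  moreover have "((length w,j),(0,j)) \<in> rel p w mode" using closure_edge edge_R assms by blast
  ultimately show ?thesis using rel_trans by blast
qed

lemma low_link:
  assumes "k < length w" "mode k = 1" "\<forall>m<k. mode m = 0"
  shows "((0, w!k),(0, Suc (w!k))) \<in> rel p w mode"
proof -
  have "((0, w!k),(k, w!k)) \<in> rel p w mode" using assms wk[OF assms(1)] by (intro vpath) auto
  moreover have "((k, w!k),(k, Suc (w!k))) \<in> rel p w mode" using horiz_edges(1)[where m=k and w=w and mode=mode and p=p, OF assms(1,2)] edge_R by blast
  moreover have "((0, Suc (w!k)),(k, Suc (w!k))) \<in> rel p w mode" using assms wk[OF assms(1)] by (intro vpath) auto
  ultimately show ?thesis using rel_sym rel_trans by blast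
qed

lemma high_link:
  assumes "k < length w" "mode k = 1" "\<forall>m. k < m \<and> m < length w \<longrightarrow> mode m = 0"
  shows "((0, w!k),(0, Suc (w!k))) \<in> rel p w mode"
proof -
  have h1: "((Suc k, w!k),(length w, w!k)) \<in> rel p w mode" using assms wk[OF assms(1)] by (intro vpath) auto
  have h2: "((Suc k, w!k),(Suc k, Suc (w!k))) \<in> rel p w mode" using horiz_edges(2)[where m=k and w=w and mode=mode and p=p, OF assms(1,2)] edge_R by blast
  have h3: "((Suc k, Suc (w!k)),(length w, Suc (w!k))) \<in> rel p w mode" using assms wk[OF assms(1)] by (intro vpath) auto
  have h4: "((length w, w!k),(0, w!k)) \<in> rel p w mode" using closure_edge edge_R wk[OF assms(1)] by auto
  have h5: "((length w, Suc (w!k)),(0, Suc (w!k))) \<in> rel p w mode" using closure_edge edge_R wk[OF assms(1)] by auto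
  have "((0, w!k),(Suc k, w!k)) \<in> rel p w mode" using rel_trans[OF rel_sym[OF h4] rel_sym[OF h1]] .
  then have "((0, w!k),(length w, Suc (w!k))) \<in> rel p w mode" using rel_trans[OF rel_trans[OF _ h2] h3] by blast
  then show ?thesis using rel_trans h5 by blast
qed

lemma edge_md:
  assumes "(x,y) \<in> diagram_edges p w (md E)"
  shows "(\<exists>j. 1 \<le> j \<and> j \<le> p \<and> x = (length w, j) \<and> y = (0,j)) \<or>
         (\<exists>m<length w. \<exists>j. 1 \<le> j \<and> j \<le> p \<and> x = (m,j) \<and> y = (Suc m,j) \<and> (m \<notin> E \<or> (j \<noteq> w!m \<and> j \<noteq> Suc (w!m)))) \<or>
         (\<exists>m<length w. m \<in> E \<and> (x = (m,w!m) \<and> y = (m,Suc (w!m)) \<or> x = (Suc m,w!m) \<and> y = (Suc m, Suc (w!m))))"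
proof -
  from edge_cases[OF assms] show ?thesis
  proof
    assume "\<exists>m<length w. (x,y) \<in> crossing_edges p m (w!m) (md E m)"
    then obtain m where m: "m < length w" "(x,y) \<in> crossing_edges p m (w!m) (md E m)" by blast
    from cross_cases[OF m(2) _ conjunct1[OF wk[OF m(1)]] conjunct2[OF wk[OF m(1)]]] md_01 m(1)
    show ?thesis unfolding md_def by (auto split: if_splits)
  qed auto
qed

lemma circles0: "circles p w {} = (\<lambda>j. blk w {j}) ` {1..p}"
proof -
  have "components p w (md {}) = (\<lambda>x. blk w {snd x}) ` diagram_vertices p w"
  proof (rule comps_by_cl[OF hw md_01, where rt = "\<lambda>x. (0, snd x)"])
    fix x y assume "(x,y) \<in> diagram_edges p w (md {})"
    then show "blk w {snd x} = blk w {snd y}" using edge_md by fastforce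
  next
    fix x assume "x \<in> diagram_vertices p w"
    then show "x \<in> blk w {snd x}" unfolding diagram_vertices_def blk_def by auto
  next
    fix x y assume "x \<in> diagram_vertices p w" "y \<in> blk w {snd x}"
    then show "y \<in> diagram_vertices p w \<and> (0, snd y) = (0, snd x)" unfolding diagram_vertices_def blk_def by auto
  next
    fix x assume "x \<in> diagram_vertices p w"
    then show "(x, (0, snd x)) \<in> rel p w (md {})"
      unfolding diagram_vertices_def by (cases x) (auto intro!: to_base simp: md_def)
  qed
  then show ?thesis unfolding circles_md using img_V[of "\<lambda>j. blk w {j}" p w] by simp
qed

end


context
  fixes p :: nat and w :: "nat list"
  assumes hw: "\<forall>i\<in>set w. 1 \<le> i \<and> i < p"
begin

lemma circles1:
  assumes k: "k < length w"
  shows "circles p w {k} = insert (blk w {w!k, Suc (w!k)}) ((\<lambda>j. blk w {j}) ` ({1..p} - {w!k, Suc (w!k)}))"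
proof -
  define i where "i = w!k"
  have i: "1 \<le> i" "i < p" using wk[OF hw k] i_def by auto
  define cls where "cls = (\<lambda>j. if j \<in> {i, Suc i} then {i, Suc i} else {j})"
  define rt where "rt = (\<lambda>x::nat\<times>nat. (0::nat, if snd x = Suc i then i else snd x))"
  have "components p w (md {k}) = (\<lambda>x. blk w (cls (snd x))) ` diagram_vertices p w"
  proof (rule comps_by_cl[OF hw md_01, where rt = rt])
    fix x y assume "(x,y) \<in> diagram_edges p w (md {k})"
    then show "blk w (cls (snd x)) = blk w (cls (snd y))"
      using edge_md[OF hw, of x y "{k}"] unfolding cls_def i_def by auto
  next
    fix x assume "x \<in> diagram_vertices p w"
    then show "x \<in> blk w (cls (snd x))" unfolding diagram_vertices_def blk_def cls_def by auto
  next
    fix x y assume "x \<in> diagram_vertices p w" "y \<in> blk w (cls (snd x))"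
    then show "y \<in> diagram_vertices p w \<and> rt y = rt x"
      using i unfolding diagram_vertices_def blk_def cls_def rt_def by (auto split: if_splits)
  next
    fix x assume x: "x \<in> diagram_vertices p w"
    obtain a j where aj: "x = (a,j)" by (cases x)
    have a: "a \<le> length w" and j: "1 \<le> j" "j \<le> p" using x aj unfolding diagram_vertices_def by auto
    have base: "((a,j),(0,j)) \<in> rel p w (md {k})"
    proof (rule to_base[OF hw a j])
      show "(\<forall>m<a. md {k} m = 0 \<or> j \<noteq> w ! m \<and> j \<noteq> Suc (w ! m)) \<or>
            (\<forall>m. a \<le> m \<and> m < length w \<longrightarrow> md {k} m = 0 \<or> j \<noteq> w ! m \<and> j \<noteq> Suc (w ! m))"
        unfolding md_def i_def[symmetric] by (cases "a \<le> k") auto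
    qed
    have ll: "((0, i),(0, Suc i)) \<in> rel p w (md {k})"
      unfolding i_def by (rule low_link[OF hw k]) (auto simp: md_def)
    show "(x, rt x) \<in> rel p w (md {k})"
    proof (cases "j = Suc i")
      case True
      then show ?thesis using base rel_sym[OF ll] rel_trans aj unfolding rt_def by auto
    next
      case False
      then show ?thesis using base aj unfolding rt_def by auto
    qed
  qed
  also have "\<dots> = (\<lambda>j. blk w (cls j)) ` {1..p}" using img_V[of "\<lambda>j. blk w (cls j)" p w] by simp
  also have "\<dots> = insert (blk w {i, Suc i}) ((\<lambda>j. blk w {j}) ` ({1..p} - {i, Suc i}))"
    using i unfolding cls_def by (auto simp: image_def)
  finally show ?thesis unfolding circles_md i_def .
qed


lemma circles2s:
  assumes kl: "k < l" "l < length w" and same: "w!l = w!k"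
  shows "circles p w {k,l} = insert ({Suc k..l} \<times> {w!k, Suc (w!k)})
           (insert (({0..k} \<union> {Suc l..length w}) \<times> {w!k, Suc (w!k)})
             ((\<lambda>j. blk w {j}) ` ({1..p} - {w!k, Suc (w!k)})))"
proof -
  define i where "i = w!k"
  have k: "k < length w" using kl by auto
  have i: "1 \<le> i" "i < p" using wk[OF hw k] i_def by auto
  have wl: "w!l = i" using same i_def by simp
  define B where "B = {i, Suc i}"
  define P where "P = {Suc k..l} \<times> B"
  define Q where "Q = ({0..k} \<union> {Suc l..length w}) \<times> B"
  define cl where "cl = (\<lambda>x::nat\<times>nat. if snd x \<in> B then (if k < fst x \<and> fst x \<le> l then P else Q) else blk w {snd x})"
  define rt where "rt = (\<lambda>x::nat\<times>nat. if snd x \<in> B then (if k < fst x \<and> fst x \<le> l then (l,i) else (0,i)) else (0::nat, snd x))"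
  have "components p w (md {k,l}) = cl ` diagram_vertices p w"
  proof (rule comps_by_cl[OF hw md_01, where rt = rt])
    fix x y assume e: "(x,y) \<in> diagram_edges p w (md {k,l})"
    from edge_md[OF hw e] consider (c) j where "x = (length w, j)" "y = (0, j)"
      | (v) m j where "m < length w" "x = (m, j)" "y = (Suc m, j)" "m \<notin> {k, l} \<or> j \<noteq> w ! m \<and> j \<noteq> Suc (w ! m)"
      | (h) m where "m \<in> {k,l}" "x = (m, w ! m) \<and> y = (m, Suc (w ! m)) \<or> x = (Suc m, w ! m) \<and> y = (Suc m, Suc (w ! m))"
      by blast
    then show "cl x = cl y"
    proof cases
      case c
      then show ?thesis using kl unfolding cl_def by auto
    next
      case (v m j)
      show ?thesis
      proof (cases "j \<in> B")
        case True
        then have "m \<noteq> k" "m \<noteq> l" using v(4) wl unfolding B_def i_def by auto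
        then have "(k < m \<and> m \<le> l) = (k < Suc m \<and> Suc m \<le> l)" by auto
        then show ?thesis using v True unfolding cl_def by simp
      next
        case False
        then show ?thesis using v unfolding cl_def by simp
      qed
    next
      case (h m)
      have "w!m = i" using h(1) wl i_def by auto
      then show ?thesis using h(2) unfolding cl_def B_def by auto
    qed
  next
    fix x assume "x \<in> diagram_vertices p w"
    then show "x \<in> cl x" unfolding diagram_vertices_def blk_def cl_def P_def Q_def by auto
  next
    fix x y assume x: "x \<in> diagram_vertices p w" and y: "y \<in> cl x"
    obtain a j where aj: "x = (a,j)" by (cases x)
    obtain b j' where bj: "y = (b,j')" by (cases y)
    have a: "a \<le> length w" and j: "1 \<le> j" "j \<le> p" using x aj unfolding diagram_vertices_def by auto
    show "y \<in> diagram_vertices p w \<and> rt y = rt x"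
    proof (cases "j \<in> B")
      case jB: True
      show ?thesis
      proof (cases "k < a \<and> a \<le> l")
        case True
        then have "j' \<in> B" "Suc k \<le> b" "b \<le> l" using y aj bj jB unfolding cl_def P_def by auto
        moreover then have "1 \<le> j'" "j' \<le> p" using i unfolding B_def by auto
        ultimately show ?thesis using aj bj True jB kl unfolding diagram_vertices_def rt_def by auto
      next
        case False
        then have "j' \<in> B" "b \<le> k \<or> (Suc l \<le> b \<and> b \<le> length w)" using y aj bj jB unfolding cl_def Q_def by auto
        moreover then have "1 \<le> j'" "j' \<le> p" using i unfolding B_def by auto
        ultimately show ?thesis using aj bj False jB kl unfolding diagram_vertices_def rt_def by auto
      qed
    next
      case False
      then have "j' = j" "b \<le> length w" using y aj bj unfolding cl_def blk_def by auto
      then show ?thesis using aj bj False j unfolding diagram_vertices_def rt_def by auto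
    qed
  next
    fix x assume x: "x \<in> diagram_vertices p w"
    obtain a j where aj: "x = (a,j)" by (cases x)
    have a: "a \<le> length w" and j: "1 \<le> j" "j \<le> p" using x aj unfolding diagram_vertices_def by auto
    have ll: "((0, i),(0, Suc i)) \<in> rel p w (md {k,l})"
      unfolding i_def using kl by (intro low_link[OF hw k]) (auto simp: md_def)
    have hl: "((l, i),(l, Suc i)) \<in> rel p w (md {k,l})"
      using horiz_edges(1)[where m=l and w=w and mode="md {k,l}" and p=p] kl wl edge_R by (auto simp: md_def)
    show "(x, rt x) \<in> rel p w (md {k,l})"
    proof (cases "j \<in> B")
      case False
      have "((a,j),(0,j)) \<in> rel p w (md {k,l})"
        using False wl unfolding B_def i_def by (intro to_base[OF hw a j]) (auto simp: md_def)
      then show ?thesis using False aj unfolding rt_def by auto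
    next
      case jB: True
      show ?thesis
      proof (cases "k < a \<and> a \<le> l")
        case True
        have "((a,j),(l,j)) \<in> rel p w (md {k,l})"
          using True jB j a kl by (intro vpath) (auto simp: md_def)
        then have "((a,j),(l,i)) \<in> rel p w (md {k,l})"
        proof -
          assume h: "((a,j),(l,j)) \<in> rel p w (md {k,l})"
          have "j = i \<or> j = Suc i" using jB unfolding B_def by auto
          then show ?thesis
          proof
            assume js: "j = Suc i" show ?thesis using rel_trans[OF h[unfolded js] rel_sym[OF hl]] js by simp
          qed (use h in simp)
        qed
        then show ?thesis using True jB aj unfolding rt_def by auto
      next
        case False
        have "((a,j),(0,j)) \<in> rel p w (md {k,l})"
          using False kl by (intro to_base[OF hw a j]) (auto simp: md_def)
        then have "((a,j),(0,i)) \<in> rel p w (md {k,l})"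
        proof -
          assume h: "((a,j),(0,j)) \<in> rel p w (md {k,l})"
          have "j = i \<or> j = Suc i" using jB unfolding B_def by auto
          then show ?thesis
          proof
            assume js: "j = Suc i" show ?thesis using rel_trans[OF h[unfolded js] rel_sym[OF ll]] js by simp
          qed (use h in simp)
        qed
        then show ?thesis using False jB aj unfolding rt_def by auto
      qed
    qed
  qed
  also have "\<dots> = insert P (insert Q ((\<lambda>j. blk w {j}) ` ({1..p} - B)))"
  proof
    show "cl ` diagram_vertices p w \<subseteq> insert P (insert Q ((\<lambda>j. blk w {j}) ` ({1..p} - B)))"
      unfolding cl_def diagram_vertices_def by auto
    have "P = cl (l,i)" "Q = cl (0,i)" unfolding cl_def B_def using kl by auto
    moreover have "(l,i) \<in> diagram_vertices p w" "(0,i) \<in> diagram_vertices p w"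
      using kl i unfolding diagram_vertices_def by auto
    moreover have "blk w {j} = cl (0,j)" "(0,j) \<in> diagram_vertices p w" if "j \<in> {1..p} - B" for j
      using that unfolding cl_def diagram_vertices_def by auto
    ultimately show "insert P (insert Q ((\<lambda>j. blk w {j}) ` ({1..p} - B))) \<subseteq> cl ` diagram_vertices p w"
      by blast
  qed
  finally show ?thesis unfolding circles_md P_def Q_def B_def i_def .
qed

definition cls2 :: "nat \<Rightarrow> nat \<Rightarrow> nat \<Rightarrow> nat set" where
  "cls2 i i' j = (if j \<in> {i, Suc i} \<union> {i', Suc i'} then
      (if {i, Suc i} \<inter> {i', Suc i'} \<noteq> {} then {i, Suc i} \<union> {i', Suc i'}
       else if j \<in> {i, Suc i} then {i, Suc i} else {i', Suc i'}) else {j})"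

lemma circles2d:
  assumes kl: "k < l" "l < length w" and diff: "w!l \<noteq> w!k"
  shows "circles p w {k,l} = (\<lambda>j. blk w (cls2 (w!k) (w!l) j)) ` {1..p}"
proof -
  define i where "i = w!k"
  define i' where "i' = w!l"
  have k: "k < length w" using kl by auto
  have i: "1 \<le> i" "i < p" using wk[OF hw k] i_def by auto
  have i': "1 \<le> i'" "i' < p" using wk[OF hw kl(2)] i'_def by auto
  have ii: "i \<noteq> i'" using diff i_def i'_def by auto
  define B where "B = {i, Suc i}"
  define B' where "B' = {i', Suc i'}"
  define r where "r = (\<lambda>j. if j \<in> B \<union> B' then (if B \<inter> B' \<noteq> {} \<or> j \<in> B then i else i') else j)"
  define cl where "cl = (\<lambda>x::nat\<times>nat. blk w (cls2 i i' (snd x)))"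
  define rt where "rt = (\<lambda>x::nat\<times>nat. (0::nat, r (snd x)))"
  have "components p w (md {k,l}) = cl ` diagram_vertices p w"
  proof (rule comps_by_cl[OF hw md_01, where rt = rt])
    fix x y assume e: "(x,y) \<in> diagram_edges p w (md {k,l})"
    from edge_md[OF hw e] consider (c) j where "x = (length w, j)" "y = (0, j)"
      | (v) m j where "x = (m, j)" "y = (Suc m, j)"
      | (h) m where "m \<in> {k,l}" "x = (m, w ! m) \<and> y = (m, Suc (w ! m)) \<or> x = (Suc m, w ! m) \<and> y = (Suc m, Suc (w ! m))"
      by blast
    then show "cl x = cl y"
    proof cases
      case c
      then show ?thesis unfolding cl_def by auto
    next
      case (v m j)
      then show ?thesis unfolding cl_def by simp
    next
      case (h m)
      have "cls2 i i' (w!m) = cls2 i i' (Suc (w!m))"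
      proof (cases "m = k")
        case True
        then show ?thesis using i_def unfolding cls2_def by simp
      next
        case False
        then have "w!m = i'" using h(1) i'_def by auto
        then show ?thesis unfolding cls2_def by auto
      qed
      then show ?thesis using h(2) unfolding cl_def by auto
    qed
  next
    fix x assume "x \<in> diagram_vertices p w"
    then show "x \<in> cl x" unfolding diagram_vertices_def blk_def cl_def cls2_def by auto
  next
    fix x y assume x: "x \<in> diagram_vertices p w" and y: "y \<in> cl x"
    obtain a j where aj: "x = (a,j)" by (cases x)
    obtain b j' where bj: "y = (b,j')" by (cases y)
    have a: "a \<le> length w" and j: "1 \<le> j" "j \<le> p" using x aj unfolding diagram_vertices_def by auto
    have jj: "j' \<in> cls2 i i' j" "b \<le> length w" using y aj bj unfolding cl_def blk_def by auto
    have "r j' = r j \<and> 1 \<le> j' \<and> j' \<le> p"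
    proof (cases "j \<in> B \<union> B'")
      case False
      then have "j' = j" using jj unfolding cls2_def B_def B'_def by auto
      then show ?thesis using j by auto
    next
      case True
      have jB: "j' \<in> B \<union> B'" using jj True unfolding cls2_def B_def B'_def by (auto split: if_splits)
      then have p1: "1 \<le> j' \<and> j' \<le> p" using i i' unfolding B_def B'_def by auto
      show ?thesis
      proof (cases "B \<inter> B' = {}")
        case False
        then show ?thesis using True jB p1 unfolding r_def by auto
      next
        case dis: True
        show ?thesis
        proof (cases "j \<in> B")
          case True
          then have "j' \<in> B" using jj dis unfolding cls2_def B_def B'_def by auto
          then show ?thesis using True p1 unfolding r_def by auto
        next
          case False
          then have "j \<in> B'" using \<open>j \<in> B \<union> B'\<close> by auto
          then have "j' \<in> B'" using jj dis False unfolding cls2_def B_def B'_def by auto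
          then have "j' \<notin> B" using dis by auto
          then show ?thesis using False \<open>j \<in> B'\<close> \<open>j' \<in> B'\<close> p1 unfolding r_def by auto
        qed
      qed
    qed
    then show "y \<in> diagram_vertices p w \<and> rt y = rt x"
      using jj aj bj unfolding diagram_vertices_def rt_def by auto
  next
    fix x assume x: "x \<in> diagram_vertices p w"
    obtain a j where aj: "x = (a,j)" by (cases x)
    have a: "a \<le> length w" and j: "1 \<le> j" "j \<le> p" using x aj unfolding diagram_vertices_def by auto
    have ll: "((0, i),(0, Suc i)) \<in> rel p w (md {k,l})"
      unfolding i_def using kl by (intro low_link[OF hw k]) (auto simp: md_def)
    have hl: "((0, i'),(0, Suc i')) \<in> rel p w (md {k,l})"
      unfolding i'_def using kl by (intro high_link[OF hw kl(2)]) (auto simp: md_def)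
    have inB: "((0,z),(0,i)) \<in> rel p w (md {k,l})" if "z \<in> B" for z
      using that ll rel_sym rel_refl unfolding B_def by auto
    have inB': "((0,z),(0,i')) \<in> rel p w (md {k,l})" if "z \<in> B'" for z
      using that hl rel_sym rel_refl unfolding B'_def by auto
    have tor: "((0,z),(0,r z)) \<in> rel p w (md {k,l})" for z
    proof (cases "z \<in> B")
      case True
      then show ?thesis using inB unfolding r_def by auto
    next
      case zB: False
      show ?thesis
      proof (cases "z \<in> B'")
        case False
        then show ?thesis using zB rel_refl unfolding r_def by auto
      next
        case True
        show ?thesis
        proof (cases "B \<inter> B' = {}")
          case True
          then show ?thesis using inB' \<open>z \<in> B'\<close> zB unfolding r_def by auto
        next
          case False
          then obtain oo where oo: "oo \<in> B" "oo \<in> B'" by blast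
          have "((0,z),(0,oo)) \<in> rel p w (md {k,l})"
            using inB'[OF \<open>z \<in> B'\<close>] inB'[OF oo(2)] rel_sym rel_trans by blast
          then have "((0,z),(0,i)) \<in> rel p w (md {k,l})" using inB[OF oo(1)] rel_trans by blast
          then show ?thesis using False \<open>z \<in> B'\<close> unfolding r_def by auto
        qed
      qed
    qed
    have wk': "w!k = i" "w!l = i'" using i_def i'_def by auto
    have "\<exists>z. ((a,j),(0,z)) \<in> rel p w (md {k,l}) \<and> r z = r j"
    proof (cases "j \<in> B \<and> j \<in> B' \<and> k < a \<and> a \<le> l")
      case False
      have "((a,j),(0,j)) \<in> rel p w (md {k,l})"
      proof (rule to_base[OF hw a j])
        show "(\<forall>m<a. md {k, l} m = 0 \<or> j \<noteq> w ! m \<and> j \<noteq> Suc (w ! m)) \<or>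
              (\<forall>m. a \<le> m \<and> m < length w \<longrightarrow> md {k, l} m = 0 \<or> j \<noteq> w ! m \<and> j \<noteq> Suc (w ! m))"
          using False kl wk' unfolding md_def B_def B'_def by (cases "a \<le> k"; cases "a \<le> l") auto
      qed
      then show ?thesis by blast
    next
      case True
      define j2 where "j2 = (if j = i then Suc i else i)"
      have j2B: "j2 \<in> B" "j2 \<notin> B'" "j2 \<noteq> j" using True ii unfolding j2_def B_def B'_def by auto
      have j2p: "1 \<le> j2" "j2 \<le> p" using i unfolding j2_def by auto
      have "((Suc k, j),(a, j)) \<in> rel p w (md {k,l})"
        using True j a by (intro vpath) (auto simp: md_def)
      moreover have "((Suc k, j),(Suc k, j2)) \<in> rel p w (md {k,l})"
      proof -
        have "((Suc k, i),(Suc k, Suc i)) \<in> rel p w (md {k,l})"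
          using horiz_edges(2)[where m=k and w=w and mode="md {k,l}" and p=p] k edge_R wk' by (auto simp: md_def)
        then show ?thesis using True j2B rel_sym unfolding j2_def B_def by auto
      qed
      moreover have "((Suc k, j2),(0, j2)) \<in> rel p w (md {k,l})"
      proof (rule to_base[OF hw _ j2p])
        show "Suc k \<le> length w" using k by auto
        show "(\<forall>m<Suc k. md {k, l} m = 0 \<or> j2 \<noteq> w ! m \<and> j2 \<noteq> Suc (w ! m)) \<or>
              (\<forall>m. Suc k \<le> m \<and> m < length w \<longrightarrow> md {k, l} m = 0 \<or> j2 \<noteq> w ! m \<and> j2 \<noteq> Suc (w ! m))"
          using j2B wk' unfolding md_def B'_def by auto
      qed
      ultimately have "((a,j),(0,j2)) \<in> rel p w (md {k,l})" using rel_sym rel_trans by blast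
      moreover have "r j2 = r j" using True j2B unfolding r_def by auto
      ultimately show ?thesis by blast
    qed
    then obtain z where "((a,j),(0,z)) \<in> rel p w (md {k,l})" "r z = r j" by blast
    then show "(x, rt x) \<in> rel p w (md {k,l})"
      using tor[of z] rel_trans aj unfolding rt_def by auto
  qed
  then show ?thesis unfolding circles_md cl_def i_def i'_def
    using img_V[of "\<lambda>j. blk w (cls2 (w!k) (w!l) j)" p w] by simp
qed

lemma cls2_far:
  assumes "{i, Suc i} \<inter> {i', Suc i'} = {}" "1 \<le> i" "i < p" "1 \<le> i'" "i' < p"
  shows "(\<lambda>j. blk w (cls2 i i' j)) ` {1..p} =
    insert (blk w {i, Suc i}) (insert (blk w {i', Suc i'}) ((\<lambda>j. blk w {j}) ` ({1..p} - {i, Suc i} - {i', Suc i'})))"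
proof -
  have sp: "{1..p} = {i, Suc i} \<union> {i', Suc i'} \<union> ({1..p} - {i, Suc i} - {i', Suc i'})" using assms by auto
  have a: "(\<lambda>j. blk w (cls2 i i' j)) ` {i, Suc i} = {blk w {i, Suc i}}" using assms(1) unfolding cls2_def by auto
  have b: "(\<lambda>j. blk w (cls2 i i' j)) ` {i', Suc i'} = {blk w {i', Suc i'}}"
  proof -
    have "cls2 i i' j = {i', Suc i'}" if "j \<in> {i', Suc i'}" for j
    proof -
      have "j \<notin> {i, Suc i}" using that assms(1) by blast
      then show ?thesis using that assms(1) unfolding cls2_def by auto
    qed
    then show ?thesis by auto
  qed
  have c: "(\<lambda>j. blk w (cls2 i i' j)) ` ({1..p} - {i, Suc i} - {i', Suc i'}) = (\<lambda>j. blk w {j}) ` ({1..p} - {i, Suc i} - {i', Suc i'})"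
    by (rule image_cong) (auto simp: cls2_def)
  show ?thesis by (subst sp) (simp only: image_Un a b c, auto)
qed

lemma cls2_adj:
  assumes "{i, Suc i} \<inter> {i', Suc i'} \<noteq> {}" "1 \<le> i" "i < p" "1 \<le> i'" "i' < p"
  shows "(\<lambda>j. blk w (cls2 i i' j)) ` {1..p} =
    insert (blk w ({i, Suc i} \<union> {i', Suc i'})) ((\<lambda>j. blk w {j}) ` ({1..p} - ({i, Suc i} \<union> {i', Suc i'})))"
proof -
  have sp: "{1..p} = ({i, Suc i} \<union> {i', Suc i'}) \<union> ({1..p} - ({i, Suc i} \<union> {i', Suc i'}))" using assms by auto
  have a: "(\<lambda>j. blk w (cls2 i i' j)) ` ({i, Suc i} \<union> {i', Suc i'}) = {blk w ({i, Suc i} \<union> {i', Suc i'})}"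
  proof -
    have "cls2 i i' j = {i, Suc i} \<union> {i', Suc i'}" if "j \<in> {i, Suc i} \<union> {i', Suc i'}" for j
      using that assms(1) unfolding cls2_def by (simp only: Un_iff not_False_eq_True if_True)
    then show ?thesis by auto
  qed
  have c: "(\<lambda>j. blk w (cls2 i i' j)) ` ({1..p} - ({i, Suc i} \<union> {i', Suc i'})) = (\<lambda>j. blk w {j}) ` ({1..p} - ({i, Suc i} \<union> {i', Suc i'}))"
    by (rule image_cong) (auto simp: cls2_def)
  have "(\<lambda>j. blk w (cls2 i i' j)) ` {1..p} = (\<lambda>j. blk w (cls2 i i' j)) ` ({i, Suc i} \<union> {i', Suc i'})
     \<union> (\<lambda>j. blk w (cls2 i i' j)) ` ({1..p} - ({i, Suc i} \<union> {i', Suc i'}))"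
    by (subst sp, rule image_Un)
  then show ?thesis unfolding a c by simp
qed

end


lemma finite_components: "finite (components p w mode)"
proof -
  have "finite (diagram_vertices p w)" unfolding diagram_vertices_def by auto
  then show ?thesis unfolding components_def quotient_def by (intro finite_UN_I) auto
qed

lemma finite_circles: "finite (circles p w E)"
  unfolding circles_def by (rule finite_components)

lemma finite_kh_gens: "finite (kh_gens p w)"
proof -
  have "kh_gens p w \<subseteq> (\<Union>E\<in>Pow {..<length w}. Pair E ` Pow (circles p w E))"
    unfolding kh_gens_def by auto
  moreover have "finite (\<Union>E\<in>Pow {..<length w}. Pair E ` Pow (circles p w E))"
    using finite_circles by (intro finite_UN_I) auto
  ultimately show ?thesis by (rule finite_subset)
qed

lemma ec_nz:
  assumes "edge_coeff p w g g' \<noteq> 0"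
  shows "\<exists>k<length w. k \<notin> fst g \<and> fst g' = insert k (fst g)"
  using assms unfolding edge_coeff_def Let_def by (auto split: if_splits)

lemma ec_valid:
  assumes "g \<in> kh_gens p w" "edge_coeff p w g g' \<noteq> 0"
  shows "g' \<in> kh_gens p w"
proof -
  obtain E S where g: "g = (E,S)" by (cases g)
  obtain E' S' where g': "g' = (E',S')" by (cases g')
  define A where "A = circles p w E - circles p w E'"
  define A' where "A' = circles p w E' - circles p w E"
  have c: "\<exists>k<length w. k \<notin> E \<and> E' = insert k E" "S - A = S' - A'"
    using assms(2) unfolding edge_coeff_def Let_def g g' A_def A'_def by (auto split: if_splits)
  have "E \<subseteq> {..<length w}" "S \<subseteq> circles p w E" using assms(1) g unfolding kh_gens_def by auto
  then have "E' \<subseteq> {..<length w}" using c(1) by auto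
  moreover have "S' \<subseteq> circles p w E'"
  proof
    fix x assume x: "x \<in> S'"
    show "x \<in> circles p w E'"
    proof (cases "x \<in> A'")
      case True then show ?thesis unfolding A'_def by auto
    next
      case False
      then have "x \<in> S - A" using c(2) x by auto
      then show ?thesis using \<open>S \<subseteq> circles p w E\<close> unfolding A_def by auto
    qed
  qed
  ultimately show ?thesis unfolding g' kh_gens_def by auto
qed

lemma card_inter2:
  assumes "C1 \<noteq> C2"
  shows "card (S \<inter> {C1, C2}) = (if C1 \<in> S then 1 else 0) + (if C2 \<in> S then 1 else 0)"
proof -
  have "S \<inter> {C1, C2} = (if C1 \<in> S then {C1} else {}) \<union> (if C2 \<in> S then {C2} else {})" by auto
  then show ?thesis using assms by (auto simp: card_insert_if)
qed

lemma merge_cond1: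
  assumes "C1 \<noteq> C2" "C1 \<notin> R0" "C2 \<notin> R0" "S \<subseteq> insert C1 (insert C2 R0)" "R \<subseteq> R0"
  shows "(S - {C1,C2} = R \<and> card (S \<inter> {C1,C2}) = 1) \<longleftrightarrow> (S = insert C1 R \<or> S = insert C2 R)"
proof (cases "C1 \<in> S"; cases "C2 \<in> S")
  assume a: "C1 \<in> S" "C2 \<in> S"
  then have "S \<inter> {C1,C2} = {C1,C2}" by auto
  then have "card (S \<inter> {C1,C2}) = 2" using assms(1) by simp
  moreover have "S \<noteq> insert C1 R" "S \<noteq> insert C2 R" using a assms by blast+
  ultimately show ?thesis by simp
next
  assume a: "C1 \<in> S" "C2 \<notin> S"
  then have "S \<inter> {C1,C2} = {C1}" by auto
  moreover have "S \<noteq> insert C2 R" using a by blast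
  moreover have "(S - {C1,C2} = R) \<longleftrightarrow> S = insert C1 R" using a assms by blast
  ultimately show ?thesis by simp
next
  assume a: "C1 \<notin> S" "C2 \<in> S"
  then have "S \<inter> {C1,C2} = {C2}" by auto
  moreover have "S \<noteq> insert C1 R" using a by blast
  moreover have "(S - {C1,C2} = R) \<longleftrightarrow> S = insert C2 R" using a assms by blast
  ultimately show ?thesis by simp
next
  assume a: "C1 \<notin> S" "C2 \<notin> S"
  then have "S \<inter> {C1,C2} = {}" by auto
  moreover have "S \<noteq> insert C1 R" "S \<noteq> insert C2 R" using a by blast+
  ultimately show ?thesis by simp
qed

lemma merge_cond0:
  assumes "C1 \<noteq> C2" "C1 \<notin> R0" "C2 \<notin> R0" "S \<subseteq> insert C1 (insert C2 R0)" "R \<subseteq> R0"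
  shows "(S - {C1,C2} = R \<and> S \<inter> {C1,C2} = {}) \<longleftrightarrow> S = R"
  using assms by blast

lemma split_cond:
  assumes "M \<notin> R0" "S \<subseteq> insert M R0" "R \<subseteq> R0"
  shows "(S - {M} = R \<and> M \<in> S) \<longleftrightarrow> S = insert M R" "(S - {M} = R \<and> M \<notin> S) \<longleftrightarrow> S = R"
  using assms by blast+

lemma ec_merge:
  assumes m: "m < length w" "m \<notin> E" and E': "E' = insert m E"
    and CE: "circles p w E = insert C1 (insert C2 R0)"
    and CE': "circles p w E' = insert M R0"
    and d: "C1 \<noteq> C2" "C1 \<notin> R0" "C2 \<notin> R0" "M \<notin> R0" "M \<noteq> C1" "M \<noteq> C2"
    and S: "S \<subseteq> insert C1 (insert C2 R0)" and S': "S' \<subseteq> insert M R0"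
  shows "edge_coeff p w (E,S) (E', S') =
    (if S \<in> (if M \<in> S' then {insert C1 (S' - {M}), insert C2 (S' - {M})} else {S'})
     then (-1) ^ card {j \<in> E. j < m} else 0)"
proof -
  have A: "circles p w E - circles p w E' = {C1, C2}" using CE CE' d by auto
  have A': "circles p w E' - circles p w E = {M}" using CE CE' d by auto
  have ex: "\<exists>k. k < length w \<and> k \<notin> E \<and> E' = insert k E" using m E' by blast
  have mn: "Min (E' - E) = m"
  proof -
    have "E' - E = {m}" using m E' by auto
    then show ?thesis by simp
  qed
  have c2: "card {C1, C2} = 2" using d by auto
  have "(S - {C1, C2} = S' - {M} \<and>
        ((S \<inter> {C1, C2} = {} \<and> S' \<inter> {M} = {}) \<or> (card (S \<inter> {C1, C2}) = 1 \<and> S' \<inter> {M} = {M})))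
     \<longleftrightarrow> S \<in> (if M \<in> S' then {insert C1 (S' - {M}), insert C2 (S' - {M})} else {S'})"
  proof (cases "M \<in> S'")
    case True
    have R: "S' - {M} \<subseteq> R0" using S' by auto
    have e1: "S' \<inter> {M} = {M}" using True by auto
    show ?thesis using merge_cond1[OF d(1-3) S R] True by (simp add: e1)
  next
    case False
    have R: "S' \<subseteq> R0" using S' False by auto
    have e1: "S' \<inter> {M} = {}" "S' - {M} = S'" using False by auto
    show ?thesis using merge_cond0[OF d(1-3) S R] False by (simp add: e1)
  qed
  then show ?thesis
    unfolding edge_coeff_def Let_def fst_conv snd_conv A A' mn using ex c2 by auto
qed

lemma ec_split:
  assumes m: "m < length w" "m \<notin> E" and E': "E' = insert m E"
    and CE: "circles p w E = insert M R0"
    and CE': "circles p w E' = insert P1 (insert P2 R0)"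
    and d: "P1 \<noteq> P2" "P1 \<notin> R0" "P2 \<notin> R0" "M \<notin> R0" "M \<noteq> P1" "M \<noteq> P2"
    and S: "S \<subseteq> insert M R0" and S': "S' \<subseteq> insert P1 (insert P2 R0)"
  shows "edge_coeff p w (E,S) (E', S') =
    (if S \<in> (if P1 \<in> S' \<and> P2 \<in> S' then {insert M (S' - {P1, P2})}
              else if P1 \<in> S' \<or> P2 \<in> S' then {S' - {P1, P2}} else {})
     then (-1) ^ card {j \<in> E. j < m} else 0)"
proof -
  have A: "circles p w E - circles p w E' = {M}" using CE CE' d by auto
  have A': "circles p w E' - circles p w E = {P1, P2}" using CE CE' d by auto
  have ex: "\<exists>k. k < length w \<and> k \<notin> E \<and> E' = insert k E" using m E' by blast
  have mn: "Min (E' - E) = m"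
  proof -
    have "E' - E = {m}" using m E' by auto
    then show ?thesis by simp
  qed
  have c2: "card {P1, P2} = 2" using d by auto
  have "(S - {M} = S' - {P1, P2} \<and>
        ((S \<inter> {M} = {} \<and> card (S' \<inter> {P1, P2}) = 1) \<or> (S \<inter> {M} = {M} \<and> S' \<inter> {P1, P2} = {P1, P2})))
     \<longleftrightarrow> S \<in> (if P1 \<in> S' \<and> P2 \<in> S' then {insert M (S' - {P1, P2})}
              else if P1 \<in> S' \<or> P2 \<in> S' then {S' - {P1, P2}} else {})"
  proof -
    have R: "S' - {P1, P2} \<subseteq> R0" using S' by auto
    have m1: "(S \<inter> {M} = {}) = (M \<notin> S)" "(S \<inter> {M} = {M}) = (M \<in> S)" by auto
    have m2: "(S' \<inter> {P1, P2} = {P1, P2}) = (P1 \<in> S' \<and> P2 \<in> S')" by auto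
    note sc = split_cond[OF d(4) S R]
    show ?thesis
    proof (cases "P1 \<in> S'"; cases "P2 \<in> S'")
      assume "P1 \<in> S'" "P2 \<in> S'"
      then show ?thesis using sc unfolding m1 m2 card_inter2[OF d(1)] by auto
    next
      assume "P1 \<in> S'" "P2 \<notin> S'"
      then show ?thesis using sc unfolding m1 m2 card_inter2[OF d(1)] by auto
    next
      assume "P1 \<notin> S'" "P2 \<in> S'"
      then show ?thesis using sc unfolding m1 m2 card_inter2[OF d(1)] by auto
    next
      assume "P1 \<notin> S'" "P2 \<notin> S'"
      then show ?thesis unfolding m1 m2 card_inter2[OF d(1)] by auto
    qed
  qed
  then show ?thesis
    unfolding edge_coeff_def Let_def fst_conv snd_conv A A' mn using ex c2 by auto
qed

lemma sum_if_in:
  assumes "finite X" "Y \<subseteq> X"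
  shows "(\<Sum>S\<in>X. (if S \<in> Y then (a::int) else 0) * f S) = a * (\<Sum>S\<in>Y. f S)"
proof -
  have "(\<Sum>S\<in>X. (if S \<in> Y then a else 0) * f S) = (\<Sum>S\<in>X. if S \<in> Y then a * f S else 0)"
    by (rule sum.cong) auto
  also have "\<dots> = (\<Sum>S\<in>X \<inter> Y. a * f S)" using assms(1) by (rule sum.inter_restrict[symmetric])
  also have "X \<inter> Y = Y" using assms(2) by auto
  finally show ?thesis by (simp add: sum_distrib_left)
qed

lemma sum_merge:
  assumes m: "m < length w" "m \<notin> E" and E': "E' = insert m E"
    and CE: "circles p w E = insert C1 (insert C2 R0)"
    and CE': "circles p w E' = insert M R0"
    and d: "C1 \<noteq> C2" "C1 \<notin> R0" "C2 \<notin> R0" "M \<notin> R0" "M \<noteq> C1" "M \<noteq> C2"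
    and S': "S' \<subseteq> insert M R0"
  shows "(\<Sum>S\<in>Pow (circles p w E). edge_coeff p w (E,S) (E', S') * f S) =
    (-1) ^ card {j \<in> E. j < m} * (if M \<in> S' then f (insert C1 (S' - {M})) + f (insert C2 (S' - {M})) else f S')"
proof -
  define Y where "Y = (if M \<in> S' then {insert C1 (S' - {M}), insert C2 (S' - {M})} else {S'})"
  have "(\<Sum>S\<in>Pow (circles p w E). edge_coeff p w (E,S) (E', S') * f S) =
        (\<Sum>S\<in>Pow (circles p w E). (if S \<in> Y then (-1) ^ card {j \<in> E. j < m} else 0) * f S)"
    unfolding Y_def by (rule sum.cong[OF refl]) (subst ec_merge[OF m E' CE CE' d _ S'], auto simp: CE)
  also have "\<dots> = (-1) ^ card {j \<in> E. j < m} * (\<Sum>S\<in>Y. f S)"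
  proof (rule sum_if_in)
    show "finite (Pow (circles p w E))" using finite_circles by auto
    have "S' - {M} \<subseteq> R0" using S' by auto
    then show "Y \<subseteq> Pow (circles p w E)" unfolding Y_def CE using S' d by auto
  qed
  also have "(\<Sum>S\<in>Y. f S) = (if M \<in> S' then f (insert C1 (S' - {M})) + f (insert C2 (S' - {M})) else f S')"
  proof (cases "M \<in> S'")
    case True
    have "S' - {M} \<subseteq> R0" using S' by auto
    then have "insert C1 (S' - {M}) \<noteq> insert C2 (S' - {M})" using d by auto
    then show ?thesis using True unfolding Y_def by simp
  next
    case False
    then show ?thesis unfolding Y_def by simp
  qed
  finally show ?thesis .
qed

lemma sum_split:
  assumes m: "m < length w" "m \<notin> E" and E': "E' = insert m E"
    and CE: "circles p w E = insert M R0"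
    and CE': "circles p w E' = insert P1 (insert P2 R0)"
    and d: "P1 \<noteq> P2" "P1 \<notin> R0" "P2 \<notin> R0" "M \<notin> R0" "M \<noteq> P1" "M \<noteq> P2"
    and S': "S' \<subseteq> insert P1 (insert P2 R0)"
  shows "(\<Sum>S\<in>Pow (circles p w E). edge_coeff p w (E,S) (E', S') * f S) =
    (-1) ^ card {j \<in> E. j < m} * (if P1 \<in> S' \<and> P2 \<in> S' then f (insert M (S' - {P1, P2}))
              else if P1 \<in> S' \<or> P2 \<in> S' then f (S' - {P1, P2}) else 0)"
proof -
  define Y where "Y = (if P1 \<in> S' \<and> P2 \<in> S' then {insert M (S' - {P1, P2})}
              else if P1 \<in> S' \<or> P2 \<in> S' then {S' - {P1, P2}} else {})"
  have "(\<Sum>S\<in>Pow (circles p w E). edge_coeff p w (E,S) (E', S') * f S) =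
        (\<Sum>S\<in>Pow (circles p w E). (if S \<in> Y then (-1) ^ card {j \<in> E. j < m} else 0) * f S)"
    unfolding Y_def by (rule sum.cong[OF refl]) (subst ec_split[OF m E' CE CE' d _ S'], auto simp: CE)
  also have "\<dots> = (-1) ^ card {j \<in> E. j < m} * (\<Sum>S\<in>Y. f S)"
  proof (rule sum_if_in)
    show "finite (Pow (circles p w E))" using finite_circles by auto
    have "S' - {P1, P2} \<subseteq> R0" using S' by auto
    then show "Y \<subseteq> Pow (circles p w E)" unfolding Y_def CE using S' d by auto
  qed
  also have "(\<Sum>S\<in>Y. f S) = (if P1 \<in> S' \<and> P2 \<in> S' then f (insert M (S' - {P1, P2}))
              else if P1 \<in> S' \<or> P2 \<in> S' then f (S' - {P1, P2}) else 0)"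
    unfolding Y_def by simp
  finally show ?thesis .
qed

lemma kh_d_restrict:
  assumes "\<And>g. g \<in> kh_gens p w \<Longrightarrow> c g \<noteq> 0 \<Longrightarrow> edge_coeff p w g g' \<noteq> 0 \<Longrightarrow> g \<in> X"
    and "X \<subseteq> kh_gens p w"
  shows "kh_d p w c g' = (\<Sum>g\<in>X. edge_coeff p w g g' * c g)"
  unfolding kh_d_def
  by (rule sum.mono_neutral_right[OF finite_kh_gens assms(2)]) (use assms(1) in auto)

lemma kh_d_deg0:
  assumes "\<And>g. b g \<noteq> 0 \<Longrightarrow> fst g = {}"
  shows "kh_d p w b g' = (\<Sum>S\<in>Pow (circles p w {}). edge_coeff p w ({},S) g' * b ({},S))"
proof -
  have "kh_d p w b g' = (\<Sum>g\<in>Pair {} ` Pow (circles p w {}). edge_coeff p w g g' * b g)"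
  proof (rule kh_d_restrict)
    fix g assume "g \<in> kh_gens p w" "b g \<noteq> 0"
    then show "g \<in> Pair {} ` Pow (circles p w {})" using assms unfolding kh_gens_def by force
  qed (auto simp: kh_gens_def)
  also have "\<dots> = (\<Sum>S\<in>Pow (circles p w {}). edge_coeff p w ({},S) g' * b ({},S))"
    by (subst sum.reindex) (auto simp: inj_on_def)
  finally show ?thesis .
qed

lemma kh_d_deg1:
  assumes "\<And>g. c g \<noteq> 0 \<Longrightarrow> card (fst g) = 1" and kl: "k \<noteq> l" "k < length w" "l < length w"
  shows "kh_d p w c ({k,l}, S') = (\<Sum>S\<in>Pow (circles p w {k}). edge_coeff p w ({k},S) ({k,l},S') * c ({k},S))
        + (\<Sum>S\<in>Pow (circles p w {l}). edge_coeff p w ({l},S) ({k,l},S') * c ({l},S))"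
proof -
  have "kh_d p w c ({k,l}, S') = (\<Sum>g\<in>Pair {k} ` Pow (circles p w {k}) \<union> Pair {l} ` Pow (circles p w {l}). edge_coeff p w g ({k,l},S') * c g)"
  proof (rule kh_d_restrict)
    fix g assume g: "g \<in> kh_gens p w" "c g \<noteq> 0" "edge_coeff p w g ({k,l},S') \<noteq> 0"
    obtain E S where gES: "g = (E,S)" by (cases g)
    obtain x where Ex: "E = {x}" using assms(1)[OF g(2)] gES by (auto simp: card_Suc_eq)
    obtain y where "{k,l} = insert y E" using ec_nz[OF g(3)] gES by auto
    then have "x = k \<or> x = l" using Ex by auto
    then show "g \<in> Pair {k} ` Pow (circles p w {k}) \<union> Pair {l} ` Pow (circles p w {l})"
      using g(1) gES Ex unfolding kh_gens_def by auto
  next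
    show "Pair {k} ` Pow (circles p w {k}) \<union> Pair {l} ` Pow (circles p w {l}) \<subseteq> kh_gens p w"
      using kl unfolding kh_gens_def by auto
  qed
  also have "\<dots> = (\<Sum>g\<in>Pair {k} ` Pow (circles p w {k}). edge_coeff p w g ({k,l},S') * c g)
     + (\<Sum>g\<in>Pair {l} ` Pow (circles p w {l}). edge_coeff p w g ({k,l},S') * c g)"
    by (rule sum.union_disjoint) (use kl finite_circles in auto)
  also have "\<dots> = (\<Sum>S\<in>Pow (circles p w {k}). edge_coeff p w ({k},S) ({k,l},S') * c ({k},S))
        + (\<Sum>S\<in>Pow (circles p w {l}). edge_coeff p w ({l},S) ({k,l},S') * c ({l},S))"
    by (subst sum.reindex, simp add: inj_on_def)+ simp
  finally show ?thesis .
qed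


definition phi :: "nat list \<Rightarrow> nat \<Rightarrow> nat \<Rightarrow> (nat \<times> nat) set" where
  "phi w i x = (if x = i then blk w {i, Suc i} else blk w {x})"

lemma img_swap:
  assumes "y \<in> T" "\<forall>x\<in>T. psi x = v \<longleftrightarrow> x = y" "g z = u" "\<forall>x\<in>T - {y}. g x = psi x" "z \<notin> T - {y}"
  shows "insert u (psi ` T - {v}) = g ` (insert z (T - {y}))"
proof -
  have "psi ` T - {v} = psi ` (T - {y})" using assms(1,2) by auto
  also have "\<dots> = g ` (T - {y})" using assms(4) by (intro image_cong) auto
  finally show ?thesis using assms(3) by simp
qed

lemma img_same:
  assumes "\<forall>x\<in>T. g x = psi x"
  shows "psi ` T = g ` T"
  using assms by (intro image_cong) auto

lemma img_mem:
  assumes "\<forall>x\<in>T. psi x = v \<longleftrightarrow> x = y"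
  shows "v \<in> psi ` T \<longleftrightarrow> y \<in> T"
  using assms by auto

lemma card_sign: "card {j \<in> {k}. j < (l::nat)} = (if k < l then 1 else 0)"
proof -
  have "{j \<in> {k}. j < l} = (if k < l then {k} else {})" by auto
  then show ?thesis by simp
qed

context
  fixes p :: nat and w :: "nat list"
  assumes hw: "\<forall>i\<in>set w. 1 \<le> i \<and> i < p"
begin

lemma circles1_phi:
  assumes k: "k < length w"
  shows "circles p w {k} = phi w (w!k) ` ({1..p} - {Suc (w!k)})"
proof -
  define i where "i = w!k"
  have i: "1 \<le> i" "i < p" using wk[OF hw k] i_def by auto
  have sp: "{1..p} - {Suc i} = insert i ({1..p} - {i, Suc i})" using i by auto
  have "phi w i ` ({1..p} - {Suc i}) = insert (blk w {i, Suc i}) (phi w i ` ({1..p} - {i, Suc i}))"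
  proof -
    have pii: "phi w i i = blk w {i, Suc i}" unfolding phi_def by simp
    show ?thesis unfolding sp image_insert pii ..
  qed
  also have "phi w i ` ({1..p} - {i, Suc i}) = (\<lambda>j. blk w {j}) ` ({1..p} - {i, Suc i})"
    by (intro image_cong) (auto simp: phi_def)
  finally show ?thesis using circles1[OF hw k] unfolding i_def by simp
qed

lemma inj_phi: "inj_on (phi w i) ({1..p} - {Suc i})"
  unfolding inj_on_def phi_def by auto

lemma inj_sing: "inj_on (\<lambda>j. blk w {j}) A"
  unfolding inj_on_def by auto

lemma card_circles0: "card (circles p w {}) = p"
  unfolding circles0[OF hw] by (subst card_image[OF inj_sing]) auto

lemma card_circles1:
  assumes k: "k < length w"
  shows "card (circles p w {k}) = p - 1"
proof -
  have i: "1 \<le> w!k" "w!k < p" using wk[OF hw k] by auto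
  show ?thesis unfolding circles1_phi[OF k] using i by (subst card_image[OF inj_phi]) auto
qed

lemma d1_rel:
  assumes c1: "\<And>g. c g \<noteq> 0 \<Longrightarrow> card (fst g) = 1" and dc: "kh_d p w c = (\<lambda>_. 0)"
    and kl: "k \<noteq> l" "k < length w" "l < length w"
    and Vk: "(\<Sum>S\<in>Pow (circles p w {k}). edge_coeff p w ({k},S) ({k,l},S') * c ({k},S)) = (-1) ^ card {j \<in> {k}. j < l} * X"
    and Vl: "(\<Sum>S\<in>Pow (circles p w {l}). edge_coeff p w ({l},S) ({k,l},S') * c ({l},S)) = (-1) ^ card {j \<in> {l}. j < k} * Y"
  shows "X = Y"
proof -
  have "0 = kh_d p w c ({k,l}, S')" using dc by simp
  also have "\<dots> = (-1) ^ card {j \<in> {k}. j < l} * X + (-1) ^ card {j \<in> {l}. j < k} * Y"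
    using kh_d_deg1[OF c1 kl] Vk Vl by simp
  finally show ?thesis using kl(1) unfolding card_sign by (cases "k < l") auto
qed

end


context
  fixes p :: nat and w :: "nat list"
  assumes hw: "\<forall>i\<in>set w. 1 \<le> i \<and> i < p"
begin

lemma phi_insert_back:
  assumes "i \<in> T"
  shows "phi w i ` T = insert (blk w {i, Suc i}) ((\<lambda>x. blk w {x}) ` (T - {i}))"
proof -
  have "T = insert i (T - {i})" using assms by auto
  then have "phi w i ` T = insert (phi w i i) (phi w i ` (T - {i}))" by (metis image_insert)
  also have "phi w i ` (T - {i}) = (\<lambda>x. blk w {x}) ` (T - {i})" by (intro image_cong) (auto simp: phi_def)
  finally show ?thesis by (simp add: phi_def)
qed

lemma phi_notin:
  assumes "i \<notin> T"
  shows "phi w i ` T = (\<lambda>x. blk w {x}) ` T"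
  using assms by (intro image_cong) (auto simp: phi_def)

lemma F1_lt:
  assumes c1: "\<And>g. c g \<noteq> 0 \<Longrightarrow> card (fst g) = 1" and dc: "kh_d p w c = (\<lambda>_. 0)"
    and kl: "k < l" "l < length w" and same: "w!l = w!k"
    and T: "T \<subseteq> {1..p} - {Suc (w!k)}"
  shows "c ({k}, phi w (w!k) ` T) = c ({l}, phi w (w!k) ` T)"
proof -
  define i where "i = w!k"
  have k: "k < length w" using kl by auto
  have i: "1 \<le> i" "i < p" using wk[OF hw k] i_def by auto
  define B where "B = {i, Suc i}"
  define P where "P = {Suc k..l} \<times> B"
  define Q where "Q = ({0..k} \<union> {Suc l..length w}) \<times> B"
  define R0 where "R0 = (\<lambda>j. blk w {j}) ` ({1..p} - B)"
  have CE': "circles p w {k,l} = insert P (insert Q R0)"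
    using circles2s[OF hw kl same] unfolding P_def Q_def R0_def B_def i_def by simp
  have CEk: "circles p w {k} = insert (blk w B) R0"
    using circles1[OF hw k] unfolding R0_def B_def i_def by simp
  have CEl: "circles p w {l} = insert (blk w B) R0"
    using circles1[OF hw kl(2)] same unfolding R0_def B_def i_def by simp
  have w1: "(0,i) \<in> Q" "(0,i) \<notin> P" "(Suc k, i) \<in> blk w B" "(Suc k, i) \<notin> Q" "(0,i) \<in> blk w B"
    using kl unfolding P_def Q_def B_def blk_def by auto
  have w2: "(0,x) \<in> blk w {x}" "(0,x) \<notin> P" "(Suc k, x) \<in> blk w {x}" "(Suc k, x) \<notin> Q" for x
    using kl unfolding P_def Q_def B_def blk_def by auto
  have d: "P \<noteq> Q" "P \<notin> R0" "Q \<notin> R0" "blk w B \<notin> R0" "blk w B \<noteq> P" "blk w B \<noteq> Q"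
  proof -
    show "P \<noteq> Q" using w1 by blast
    show "P \<notin> R0" unfolding R0_def using w2 by blast
    show "Q \<notin> R0" unfolding R0_def using w2 by blast
    show "blk w B \<notin> R0" unfolding R0_def B_def by auto
    show "blk w B \<noteq> P" using w1 by blast
    show "blk w B \<noteq> Q" using w1 by blast
  qed
  define X where "X = (\<lambda>x. blk w {x}) ` (T - {i})"
  have Ti: "T \<subseteq> {1..p} - {Suc i}" using T i_def by simp
  have XR: "X \<subseteq> R0" unfolding X_def R0_def by (rule image_mono) (use Ti in \<open>auto simp: B_def\<close>)
  define S' where "S' = (if i \<in> T then insert P (insert Q X) else insert P ((\<lambda>x. blk w {x}) ` T))"
  have TR: "i \<notin> T \<Longrightarrow> (\<lambda>x. blk w {x}) ` T \<subseteq> R0" unfolding R0_def by (rule image_mono) (use Ti in \<open>auto simp: B_def\<close>)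
  have S'sub: "S' \<subseteq> insert P (insert Q R0)" using XR TR unfolding S'_def by auto
  have key: "(if P \<in> S' \<and> Q \<in> S' then F (insert (blk w B) (S' - {P, Q}))
              else if P \<in> S' \<or> Q \<in> S' then F (S' - {P, Q}) else 0) = F (phi w i ` T)" for F
  proof (cases "i \<in> T")
    case True
    have "S' - {P,Q} = X" using True XR d unfolding S'_def by auto
    moreover have "insert (blk w B) X = phi w i ` T" using phi_insert_back[OF True] unfolding X_def B_def by simp
    ultimately show ?thesis using True unfolding S'_def by simp
  next
    case False
    have "S' - {P,Q} = (\<lambda>x. blk w {x}) ` T" using False TR d unfolding S'_def by auto
    moreover have "Q \<notin> S'" using False TR d unfolding S'_def by auto
    ultimately show ?thesis using False phi_notin[OF False] unfolding S'_def by simp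
  qed
  have kl': "k \<noteq> l" using kl by simp
  show ?thesis
  proof (rule d1_rel[OF hw c1 dc kl' k kl(2), where S' = S'])
    show "(\<Sum>S\<in>Pow (circles p w {k}). edge_coeff p w ({k},S) ({k,l},S') * c ({k},S)) =
          (-1) ^ card {j \<in> {k}. j < l} * c ({k}, phi w (w!k) ` T)"
      using sum_split[OF kl(2) _ _ CEk CE' d S'sub, where f = "\<lambda>S. c ({k},S)"] kl key[of "\<lambda>S. c ({k},S)"]
      unfolding i_def by (auto simp: insert_commute)
    show "(\<Sum>S\<in>Pow (circles p w {l}). edge_coeff p w ({l},S) ({k,l},S') * c ({l},S)) =
          (-1) ^ card {j \<in> {l}. j < k} * c ({l}, phi w (w!k) ` T)"
      using sum_split[OF k _ _ CEl CE' d S'sub, where f = "\<lambda>S. c ({l},S)"] kl key[of "\<lambda>S. c ({l},S)"]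
      unfolding i_def by auto
  qed
qed


lemma F1:
  assumes c1: "\<And>g. c g \<noteq> 0 \<Longrightarrow> card (fst g) = 1" and dc: "kh_d p w c = (\<lambda>_. 0)"
    and kl: "k < length w" "l < length w" and same: "w!l = w!k"
    and T: "T \<subseteq> {1..p} - {Suc (w!k)}"
  shows "c ({k}, phi w (w!k) ` T) = c ({l}, phi w (w!k) ` T)"
proof -
  consider (lt) "k < l" | (eq) "k = l" | (gt) "l < k" by arith
  then show ?thesis
  proof cases
    case lt
    show ?thesis by (rule F1_lt[OF c1 dc lt kl(2) same T])
  next
    case eq then show ?thesis by simp
  next
    case gt
    have T': "T \<subseteq> {1..p} - {Suc (w!l)}" using T same by simp
    have "c ({l}, phi w (w!l) ` T) = c ({k}, phi w (w!l) ` T)" by (rule F1_lt[OF c1 dc gt kl(1) same[symmetric] T'])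
    then show ?thesis using same by simp
  qed
qed

lemma circles2_far:
  assumes kl: "k \<noteq> l" "k < length w" "l < length w"
    and dis: "{w!k, Suc (w!k)} \<inter> {w!l, Suc (w!l)} = {}"
  shows "circles p w {k,l} = insert (blk w {w!k, Suc (w!k)}) (insert (blk w {w!l, Suc (w!l)})
           ((\<lambda>j. blk w {j}) ` ({1..p} - {w!k, Suc (w!k)} - {w!l, Suc (w!l)})))"
proof -
  have ik: "1 \<le> w!k" "w!k < p" and il: "1 \<le> w!l" "w!l < p" using wk[OF hw kl(2)] wk[OF hw kl(3)] by auto
  have diff: "w!l \<noteq> w!k" using dis by auto
  consider "k < l" | "l < k" using kl(1) by arith
  then show ?thesis
  proof cases
    case 1
    show ?thesis using circles2d[OF hw 1 kl(3) diff] cls2_far[OF hw dis ik il] by simp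
  next
    case 2
    have dis': "{w!l, Suc (w!l)} \<inter> {w!k, Suc (w!k)} = {}" using dis by auto
    have e: "{1..p} - {w!l, Suc (w!l)} - {w!k, Suc (w!k)} = {1..p} - {w!k, Suc (w!k)} - {w!l, Suc (w!l)}" by auto
    have "circles p w {k,l} = circles p w {l,k}" by (simp add: insert_commute)
    also have "\<dots> = insert (blk w {w!l, Suc (w!l)}) (insert (blk w {w!k, Suc (w!k)})
           ((\<lambda>j. blk w {j}) ` ({1..p} - {w!l, Suc (w!l)} - {w!k, Suc (w!k)})))"
      using circles2d[OF hw 2 kl(2) diff[symmetric]] cls2_far[OF hw dis' il ik] by simp
    finally show ?thesis unfolding e by (simp add: insert_commute)
  qed
qed

lemma circles2_adj:
  assumes kl: "k \<noteq> l" "k < length w" "l < length w" and diff: "w!l \<noteq> w!k"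
    and ov: "{w!k, Suc (w!k)} \<inter> {w!l, Suc (w!l)} \<noteq> {}"
  shows "circles p w {k,l} = insert (blk w ({w!k, Suc (w!k)} \<union> {w!l, Suc (w!l)}))
           ((\<lambda>j. blk w {j}) ` ({1..p} - ({w!k, Suc (w!k)} \<union> {w!l, Suc (w!l)})))"
proof -
  have ik: "1 \<le> w!k" "w!k < p" and il: "1 \<le> w!l" "w!l < p" using wk[OF hw kl(2)] wk[OF hw kl(3)] by auto
  consider "k < l" | "l < k" using kl(1) by arith
  then show ?thesis
  proof cases
    case 1
    show ?thesis using circles2d[OF hw 1 kl(3) diff] cls2_adj[OF hw ov ik il] by simp
  next
    case 2
    have ov': "{w!l, Suc (w!l)} \<inter> {w!k, Suc (w!k)} \<noteq> {}" using ov by auto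
    have "circles p w {k,l} = circles p w {l,k}" by (simp add: insert_commute)
    also have "\<dots> = insert (blk w ({w!l, Suc (w!l)} \<union> {w!k, Suc (w!k)}))
           ((\<lambda>j. blk w {j}) ` ({1..p} - ({w!l, Suc (w!l)} \<union> {w!k, Suc (w!k)})))"
      using circles2d[OF hw 2 kl(2) diff[symmetric]] cls2_adj[OF hw ov' il ik] by simp
    finally show ?thesis by (simp add: Un_commute)
  qed
qed

lemma far_side:
  assumes kl: "k \<noteq> l" "k < length w" "l < length w"
    and dis: "{w!k, Suc (w!k)} \<inter> {w!l, Suc (w!l)} = {}"
    and T: "T \<subseteq> {1..p} - {Suc (w!k), Suc (w!l)}"
  shows "(\<Sum>S\<in>Pow (circles p w {k}). edge_coeff p w ({k},S) ({k,l},
            (\<lambda>x. if x = w!k then blk w {w!k, Suc (w!k)} else if x = w!l then blk w {w!l, Suc (w!l)} else blk w {x}) ` T)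
            * c ({k},S))
        = (-1) ^ card {j \<in> {k}. j < l} * mrg (w!l) (Suc (w!l)) (\<lambda>T. c ({k}, phi w (w!k) ` T)) T"
proof -
  define i where "i = w!k"
  define i' where "i' = w!l"
  have ik: "1 \<le> i" "i < p" and il: "1 \<le> i'" "i' < p" using wk[OF hw kl(2)] wk[OF hw kl(3)] i_def i'_def by auto
  define B where "B = {i, Suc i}"
  define B' where "B' = {i', Suc i'}"
  have disB: "B \<inter> B' = {}" using dis unfolding B_def B'_def i_def i'_def .
  define S0 where "S0 = (\<lambda>j. blk w {j}) ` ({1..p} - B - B')"
  define R0 where "R0 = insert (blk w B) S0"
  define psi where "psi = (\<lambda>x. if x = i then blk w B else if x = i' then blk w B' else blk w {x})"
  have CE': "circles p w {k,l} = insert (blk w B') R0"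
    using circles2_far[OF kl dis] unfolding R0_def S0_def B_def B'_def i_def i'_def by (simp add: insert_commute)
  have sp: "{1..p} - B = insert i' (insert (Suc i') ({1..p} - B - B'))" using disB il unfolding B'_def by auto
  have CEk: "circles p w {k} = insert (blk w {i'}) (insert (blk w {Suc i'}) R0)"
  proof -
    have "circles p w {k} = insert (blk w B) ((\<lambda>j. blk w {j}) ` ({1..p} - B))"
      using circles1[OF hw kl(2)] unfolding B_def i_def by simp
    also have "\<dots> = insert (blk w B) (insert (blk w {i'}) (insert (blk w {Suc i'}) S0))"
      unfolding S0_def by (subst sp) (simp only: image_insert)
    finally show ?thesis unfolding R0_def by auto
  qed
  have d: "blk w {i'} \<noteq> blk w {Suc i'}" "blk w {i'} \<notin> R0" "blk w {Suc i'} \<notin> R0" "blk w B' \<notin> R0"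
    "blk w B' \<noteq> blk w {i'}" "blk w B' \<noteq> blk w {Suc i'}"
    using disB unfolding R0_def S0_def B_def B'_def by auto
  have uniq: "\<forall>x\<in>T. psi x = blk w B' \<longleftrightarrow> x = i'"
    using disB unfolding psi_def B_def B'_def by auto
  have Tsub: "x \<in> T \<Longrightarrow> x \<noteq> i \<Longrightarrow> x \<noteq> i' \<Longrightarrow> x \<in> {1..p} - B - B'" for x
    using T unfolding B_def B'_def i_def[symmetric] i'_def[symmetric] by auto
  have S'sub: "psi ` T \<subseteq> insert (blk w B') R0"
    unfolding psi_def R0_def S0_def using Tsub by auto
  have iT: "i' \<noteq> i" "Suc i' \<noteq> i" "Suc i' \<notin> T" using disB T unfolding B_def B'_def i'_def by auto
  have agree: "\<forall>x\<in>T - {i'}. phi w i x = psi x" unfolding phi_def psi_def B_def by auto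
  have val: "(if blk w B' \<in> psi ` T then c ({k}, insert (blk w {i'}) (psi ` T - {blk w B'}))
              + c ({k}, insert (blk w {Suc i'}) (psi ` T - {blk w B'})) else c ({k}, psi ` T))
           = mrg i' (Suc i') (\<lambda>T. c ({k}, phi w i ` T)) T"
  proof (cases "i' \<in> T")
    case True
    have e1: "insert (blk w {i'}) (psi ` T - {blk w B'}) = phi w i ` (insert i' (T - {i'}))"
      by (rule img_swap[OF True uniq _ agree]) (use iT in \<open>auto simp: phi_def\<close>)
    have e2: "insert (blk w {Suc i'}) (psi ` T - {blk w B'}) = phi w i ` (insert (Suc i') (T - {i'}))"
      by (rule img_swap[OF True uniq _ agree]) (use iT in \<open>auto simp: phi_def\<close>)
    have "insert i' (T - {i'}) = T" using True by auto
    then show ?thesis using True img_mem[OF uniq] e1 e2 unfolding mrg_def by simp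
  next
    case False
    have "psi ` T = phi w i ` T" using agree False by (intro img_same) auto
    then show ?thesis using False img_mem[OF uniq] unfolding mrg_def by simp
  qed
  have lk: "l \<notin> {k}" "{k,l} = insert l {k}" using kl by auto
  show ?thesis
    using sum_merge[OF kl(3) lk CEk CE' d S'sub, where f = "\<lambda>S. c ({k},S)"] val
    unfolding psi_def B_def B'_def i_def i'_def by simp
qed

lemma F2:
  assumes c1: "\<And>g. c g \<noteq> 0 \<Longrightarrow> card (fst g) = 1" and dc: "kh_d p w c = (\<lambda>_. 0)"
    and kl: "k < length w" "l < length w" and far: "w!k + 2 \<le> w!l"
    and T: "T \<subseteq> {1..p} - {Suc (w!k), Suc (w!l)}"
  shows "mrg (w!l) (Suc (w!l)) (\<lambda>T. c ({k}, phi w (w!k) ` T)) T = mrg (w!k) (Suc (w!k)) (\<lambda>T. c ({l}, phi w (w!l) ` T)) T"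
proof -
  have kl': "k \<noteq> l" using far by auto
  have dis: "{w!k, Suc (w!k)} \<inter> {w!l, Suc (w!l)} = {}" using far by auto
  have dis': "{w!l, Suc (w!l)} \<inter> {w!k, Suc (w!k)} = {}" using far by auto
  define psi where "psi = (\<lambda>x. if x = w!k then blk w {w!k, Suc (w!k)} else if x = w!l then blk w {w!l, Suc (w!l)} else blk w {x})"
  have psi': "(\<lambda>x. if x = w!l then blk w {w!l, Suc (w!l)} else if x = w!k then blk w {w!k, Suc (w!k)} else blk w {x}) = psi"
    unfolding psi_def using far by (auto simp: fun_eq_iff)
  have T': "T \<subseteq> {1..p} - {Suc (w!l), Suc (w!k)}" using T by auto
  show ?thesis
  proof (rule d1_rel[OF hw c1 dc kl' kl, where S' = "psi ` T"])
    show "(\<Sum>S\<in>Pow (circles p w {k}). edge_coeff p w ({k},S) ({k,l},psi ` T) * c ({k},S)) =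
          (-1) ^ card {j \<in> {k}. j < l} * mrg (w!l) (Suc (w!l)) (\<lambda>T. c ({k}, phi w (w!k) ` T)) T"
      using far_side[OF kl' kl dis T] unfolding psi_def .
    show "(\<Sum>S\<in>Pow (circles p w {l}). edge_coeff p w ({l},S) ({k,l},psi ` T) * c ({l},S)) =
          (-1) ^ card {j \<in> {l}. j < k} * mrg (w!k) (Suc (w!k)) (\<lambda>T. c ({l}, phi w (w!l) ` T)) T"
      using far_side[OF kl'[symmetric] kl(2,1) dis' T', of c] unfolding psi' by (simp add: insert_commute)
  qed
qed


lemma F3:
  assumes c1: "\<And>g. c g \<noteq> 0 \<Longrightarrow> card (fst g) = 1" and dc: "kh_d p w c = (\<lambda>_. 0)"
    and kl: "k < length w" "l < length w" and adj: "w!l = Suc (w!k)"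
    and T: "T \<subseteq> {1..p} - {Suc (w!k), Suc (Suc (w!k))}"
  shows "mrg (w!k) (Suc (Suc (w!k))) (\<lambda>T. c ({k}, phi w (w!k) ` T)) T = mrg (w!k) (Suc (w!k)) (\<lambda>T. c ({l}, phi w (Suc (w!k)) ` T)) T"
proof -
  define i where "i = w!k"
  have ik: "1 \<le> i" "i < p" and il: "Suc i < p" using wk[OF hw kl(1)] wk[OF hw kl(2)] i_def adj by auto
  have kl': "k \<noteq> l" using adj by auto
  define B where "B = {i, Suc i}"
  define B' where "B' = {Suc i, Suc (Suc i)}"
  define U where "U = {i, Suc i, Suc (Suc i)}"
  define N where "N = blk w U"
  define S0 where "S0 = (\<lambda>j. blk w {j}) ` ({1..p} - U)"
  define psi where "psi = (\<lambda>x. if x = i then N else blk w {x})"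
  have CE': "circles p w {k,l} = insert N S0"
  proof -
    have "circles p w {k,l} = insert (blk w ({w!k, Suc (w!k)} \<union> {w!l, Suc (w!l)}))
           ((\<lambda>j. blk w {j}) ` ({1..p} - ({w!k, Suc (w!k)} \<union> {w!l, Suc (w!l)})))"
      by (rule circles2_adj[OF kl' kl]) (use adj in auto)
    moreover have "{w!k, Suc (w!k)} \<union> {w!l, Suc (w!l)} = U" unfolding U_def i_def adj by auto
    ultimately show ?thesis unfolding N_def S0_def by simp
  qed
  have Ti: "T \<subseteq> {1..p} - {Suc i, Suc (Suc i)}" using T i_def by simp
  have Tsub: "x \<in> T \<Longrightarrow> x \<noteq> i \<Longrightarrow> x \<in> {1..p} - U" for x using Ti unfolding U_def by auto
  have S'sub: "psi ` T \<subseteq> insert N S0" unfolding psi_def S0_def using Tsub by auto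
  have uniq: "\<forall>x\<in>T. psi x = N \<longleftrightarrow> x = i" unfolding psi_def N_def U_def by auto
  have nT: "Suc i \<notin> T" "Suc (Suc i) \<notin> T" using Ti by auto
  have sumk: "(\<Sum>S\<in>Pow (circles p w {k}). edge_coeff p w ({k},S) ({k,l},psi ` T) * c ({k},S)) =
          (-1) ^ card {j \<in> {k}. j < l} * mrg i (Suc (Suc i)) (\<lambda>T. c ({k}, phi w i ` T)) T"
  proof -
    have sp: "{1..p} - B = insert (Suc (Suc i)) ({1..p} - U)" using il unfolding B_def U_def by auto
    have CEk: "circles p w {k} = insert (blk w B) (insert (blk w {Suc (Suc i)}) S0)"
    proof -
      have "circles p w {k} = insert (blk w B) ((\<lambda>j. blk w {j}) ` ({1..p} - B))"
        using circles1[OF hw kl(1)] unfolding B_def i_def by simp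
      also have "\<dots> = insert (blk w B) (insert (blk w {Suc (Suc i)}) S0)"
        unfolding S0_def by (subst sp) (simp only: image_insert)
      finally show ?thesis .
    qed
    have d: "blk w B \<noteq> blk w {Suc (Suc i)}" "blk w B \<notin> S0" "blk w {Suc (Suc i)} \<notin> S0" "N \<notin> S0"
      "N \<noteq> blk w B" "N \<noteq> blk w {Suc (Suc i)}"
    proof -
      have neq: "U \<noteq> B"
      proof
        assume "U = B"
        then have "Suc (Suc i) \<in> B" unfolding U_def by auto
        then show False unfolding B_def by auto
      qed
      show "blk w B \<noteq> blk w {Suc (Suc i)}" "blk w B \<notin> S0" "blk w {Suc (Suc i)} \<notin> S0" "N \<notin> S0"
        "N \<noteq> blk w B" "N \<noteq> blk w {Suc (Suc i)}"
        using neq unfolding S0_def N_def B_def U_def by auto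
    qed
    have agree: "\<forall>x\<in>T - {i}. phi w i x = psi x" unfolding phi_def psi_def by auto
    have val: "(if N \<in> psi ` T then c ({k}, insert (blk w B) (psi ` T - {N}))
              + c ({k}, insert (blk w {Suc (Suc i)}) (psi ` T - {N})) else c ({k}, psi ` T))
           = mrg i (Suc (Suc i)) (\<lambda>T. c ({k}, phi w i ` T)) T"
    proof (cases "i \<in> T")
      case True
      have e1: "insert (blk w B) (psi ` T - {N}) = phi w i ` (insert i (T - {i}))"
        by (rule img_swap[OF True uniq _ agree]) (auto simp: phi_def B_def)
      have e2: "insert (blk w {Suc (Suc i)}) (psi ` T - {N}) = phi w i ` (insert (Suc (Suc i)) (T - {i}))"
        by (rule img_swap[OF True uniq _ agree]) (use nT in \<open>auto simp: phi_def\<close>)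
      have "insert i (T - {i}) = T" using True by auto
      then show ?thesis using True img_mem[OF uniq] e1 e2 unfolding mrg_def by simp
    next
      case False
      have "psi ` T = phi w i ` T" using agree False by (intro img_same) auto
      then show ?thesis using False img_mem[OF uniq] unfolding mrg_def by simp
    qed
    have lk: "l \<notin> {k}" "{k,l} = insert l {k}" using kl' by auto
    show ?thesis
      using sum_merge[OF kl(2) lk CEk CE' d S'sub, where f = "\<lambda>S. c ({k},S)"] val by simp
  qed
  have suml: "(\<Sum>S\<in>Pow (circles p w {l}). edge_coeff p w ({l},S) ({k,l},psi ` T) * c ({l},S)) =
          (-1) ^ card {j \<in> {l}. j < k} * mrg i (Suc i) (\<lambda>T. c ({l}, phi w (Suc i) ` T)) T"
  proof -
    have sp: "{1..p} - B' = insert i ({1..p} - U)" using ik unfolding B'_def U_def by auto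
    have CEl: "circles p w {l} = insert (blk w {i}) (insert (blk w B') S0)"
    proof -
      have "circles p w {l} = insert (blk w B') ((\<lambda>j. blk w {j}) ` ({1..p} - B'))"
        using circles1[OF hw kl(2)] adj unfolding B'_def i_def by simp
      also have "\<dots> = insert (blk w B') (insert (blk w {i}) S0)"
        unfolding S0_def by (subst sp) (simp only: image_insert)
      finally show ?thesis by auto
    qed
    have d: "blk w {i} \<noteq> blk w B'" "blk w {i} \<notin> S0" "blk w B' \<notin> S0" "N \<notin> S0"
      "N \<noteq> blk w {i}" "N \<noteq> blk w B'"
    proof -
      have neq: "U \<noteq> B'"
      proof
        assume "U = B'"
        then have "i \<in> B'" unfolding U_def by auto
        then show False unfolding B'_def by auto
      qed
      show "blk w {i} \<noteq> blk w B'" "blk w {i} \<notin> S0" "blk w B' \<notin> S0" "N \<notin> S0"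
        "N \<noteq> blk w {i}" "N \<noteq> blk w B'"
        using neq unfolding S0_def N_def B'_def U_def by auto
    qed
    have agree: "\<forall>x\<in>T - {i}. phi w (Suc i) x = psi x" using nT unfolding phi_def psi_def by auto
    have val: "(if N \<in> psi ` T then c ({l}, insert (blk w {i}) (psi ` T - {N}))
              + c ({l}, insert (blk w B') (psi ` T - {N})) else c ({l}, psi ` T))
           = mrg i (Suc i) (\<lambda>T. c ({l}, phi w (Suc i) ` T)) T"
    proof (cases "i \<in> T")
      case True
      have e1: "insert (blk w {i}) (psi ` T - {N}) = phi w (Suc i) ` (insert i (T - {i}))"
        by (rule img_swap[OF True uniq _ agree]) (auto simp: phi_def)
      have e2: "insert (blk w B') (psi ` T - {N}) = phi w (Suc i) ` (insert (Suc i) (T - {i}))"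
        by (rule img_swap[OF True uniq _ agree]) (use nT in \<open>auto simp: phi_def B'_def\<close>)
      have "insert i (T - {i}) = T" using True by auto
      then show ?thesis using True img_mem[OF uniq] e1 e2 unfolding mrg_def by simp
    next
      case False
      have "psi ` T = phi w (Suc i) ` T" using agree False by (intro img_same) auto
      then show ?thesis using False img_mem[OF uniq] unfolding mrg_def by simp
    qed
    have lk: "k \<notin> {l}" "{k,l} = insert k {l}" using kl' by auto
    show ?thesis
      using sum_merge[OF kl(1) lk CEl CE' d S'sub, where f = "\<lambda>S. c ({l},S)"] val by simp
  qed
  show ?thesis
    unfolding i_def[symmetric]
  proof (rule d1_rel[OF hw c1 dc kl' kl, where S' = "psi ` T"])
    show "(\<Sum>S\<in>Pow (circles p w {k}). edge_coeff p w ({k},S) ({k,l},psi ` T) * c ({k},S)) =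
          (-1) ^ card {j \<in> {k}. j < l} * mrg i (Suc (Suc i)) (\<lambda>T. c ({k}, phi w i ` T)) T" by (rule sumk)
    show "(\<Sum>S\<in>Pow (circles p w {l}). edge_coeff p w ({l},S) ({k,l},psi ` T) * c ({l},S)) =
          (-1) ^ card {j \<in> {l}. j < k} * mrg i (Suc i) (\<lambda>T. c ({l}, phi w (Suc i) ` T)) T" by (rule suml)
  qed
qed

end


lemma img_pre: "S \<subseteq> f ` D \<Longrightarrow> S = f ` {x \<in> D. f x \<in> S}"
  by blast

theorem theorem2:
  fixes p :: nat and w :: "nat list"
  assumes "1 \<le> p"
    and "\<forall>i \<in> set w. 1 \<le> i \<and> i < p"
    and "is_knot_closure p w"
  shows "\<forall>j. kh_vanishes p w 1 j"
proof (intro allI)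
  fix j
  have hw: "\<forall>i \<in> set w. 1 \<le> i \<and> i < p" using assms(2) .
  show "kh_vanishes p w 1 j" unfolding kh_vanishes_def
  proof (intro allI impI, elim conjE)
    fix c assume cch: "kh_chain p w 1 j c" and dc: "kh_d p w c = (\<lambda>_. 0)"
    have cv: "\<And>g. c g \<noteq> 0 \<Longrightarrow> g \<in> kh_gens p w \<and> card (fst g) = 1 \<and> qdeg p w g = j"
      using cch unfolding kh_chain_def hdeg_def by blast
    have c1: "\<And>g. c g \<noteq> 0 \<Longrightarrow> card (fst g) = 1" using cv by blast
    define G where "G = {i. \<exists>k<length w. w!k = i}"
    define rep where "rep = (\<lambda>i. SOME k. k < length w \<and> w!k = i)"
    have rep: "rep i < length w \<and> w!(rep i) = i" if "i \<in> G" for i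
    proof -
      have "\<exists>k. k < length w \<and> w!k = i" using that unfolding G_def by blast
      then show ?thesis unfolding rep_def by (rule someI_ex)
    qed
    define a where "a = (\<lambda>i T. c ({rep i}, phi w i ` T))"
    have aeq: "c ({k}, phi w (w!k) ` T) = a (w!k) T" if k: "k < length w" and T: "T \<subseteq> {1..p} - {Suc (w!k)}" for k T
    proof -
      have wG: "w!k \<in> G" using k unfolding G_def by blast
      have r: "rep (w!k) < length w" "w!(rep (w!k)) = w!k" using rep[OF wG] by auto
      show ?thesis unfolding a_def using F1[OF hw c1 dc k r T] r by simp
    qed
    have GS: "G \<subseteq> {1..<p}" using hw unfolding G_def by auto
    have far: "mrg i' (i'+1) (a i) T = mrg i (i+1) (a i') T"
      if "i \<in> G" "i' \<in> G" "i + 2 \<le> i'" "T \<subseteq> {1..p} - {i+1, i'+1}" for i i' T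
    proof -
      have r: "rep i < length w" "w!(rep i) = i" "rep i' < length w" "w!(rep i') = i'" using rep that by auto
      have T': "T \<subseteq> {1..p} - {Suc (w!rep i), Suc (w!rep i')}" using that(4) r by simp
      show ?thesis using F2[OF hw c1 dc r(1) r(3) _ T'] r that(3) unfolding a_def by simp
    qed
    have adj: "mrg i (i+2) (a i) T = mrg i (i+1) (a (i+1)) T"
      if "i \<in> G" "i + 1 \<in> G" "T \<subseteq> {1..p} - {i+1, i+2}" for i T
    proof -
      have r: "rep i < length w" "w!(rep i) = i" "rep (i+1) < length w" "w!(rep (i+1)) = i+1" using rep that by auto
      have T': "T \<subseteq> {1..p} - {Suc (w!rep i), Suc (Suc (w!rep i))}" using that(3) r by simp
      have e: "w!(rep (i+1)) = Suc (w!rep i)" using r by simp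
      show ?thesis using F3[OF hw c1 dc r(1) r(3) e T'] r unfolding a_def by simp
    qed
    obtain f where f: "\<And>i T. i \<in> G \<Longrightarrow> T \<subseteq> {1..p} - {i+1} \<Longrightarrow> mrg i (i+1) f T = a i T"
      using alg[OF GS far adj] by blast
    define f' where "f' = (\<lambda>T. if int p + int (length w) - 2 * int (card T) = j then f T else 0)"
    have f': "mrg i (i+1) f' T = a i T" if iG: "i \<in> G" and T: "T \<subseteq> {1..p} - {i+1}" for i T
    proof -
      have fin: "finite T" using T finite_subset by blast
      have cardeq: "card (insert (i+1) (T - {i})) = card T" if "i \<in> T"
      proof -
        have "i + 1 \<notin> T - {i}" using T by auto
        then have "card (insert (i+1) (T - {i})) = Suc (card (T - {i}))" using fin by simp
        also have "\<dots> = card T" by (rule card_Suc_Diff1[OF fin that])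
        finally show ?thesis .
      qed
      show ?thesis
      proof (cases "int p + int (length w) - 2 * int (card T) = j")
        case True
        then show ?thesis using f[OF iG T] cardeq unfolding mrg_def f'_def by auto
      next
        case False
        have "a i T = 0"
        proof (rule ccontr)
          assume "a i T \<noteq> 0"
          then have q: "qdeg p w ({rep i}, phi w i ` T) = j" using cv unfolding a_def by blast
          have r: "rep i < length w" "w!(rep i) = i" using rep[OF iG] by auto
          have ip: "1 \<le> i" "i < p" using iG GS by auto
          have cc: "card (circles p w {rep i}) = p - 1" using card_circles1[OF hw r(1)] .
          have ct: "card (phi w i ` T) = card T"
          proof -
            have "T \<subseteq> {1..p} - {Suc i}" using T by simp
            then show ?thesis by (rule card_image[OF inj_on_subset[OF inj_phi[OF hw]]])
          qed
          have "qdeg p w ({rep i}, phi w i ` T) = int p + int (length w) - 2 * int (card T)"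
            unfolding qdeg_def fst_conv snd_conv cc ct using ip by simp
          then show False using q False by simp
        qed
        moreover have "mrg i (i+1) f' T = 0" using False cardeq unfolding mrg_def f'_def by auto
        ultimately show ?thesis by simp
      qed
    qed
    define b where "b = (\<lambda>g::kh_gen. if fst g = {} \<and> snd g \<subseteq> circles p w {} then f' {x \<in> {1..p}. blk w {x} \<in> snd g} else 0)"
    have bsing: "b ({}, (\<lambda>x. blk w {x}) ` X) = f' X" if "X \<subseteq> {1..p}" for X
    proof -
      have "(\<lambda>x. blk w {x}) ` X \<subseteq> circles p w {}" using that circles0[OF hw] by auto
      moreover have "{x \<in> {1..p}. blk w {x} \<in> (\<lambda>x. blk w {x}) ` X} = X" using that by auto
      ultimately show ?thesis unfolding b_def by simp
    qed
    have b0: "\<And>g. b g \<noteq> 0 \<Longrightarrow> fst g = {}" unfolding b_def by (auto split: if_splits)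
    show "\<exists>b. kh_chain p w (1 - 1) j b \<and> kh_d p w b = c"
    proof (intro exI conjI)
      show "kh_chain p w (1 - 1) j b" unfolding kh_chain_def
      proof (intro allI impI)
        fix g assume bg: "b g \<noteq> 0"
        obtain E S where g: "g = (E,S)" by (cases g)
        have E: "E = {}" and S: "S \<subseteq> circles p w {}" using bg unfolding b_def g by (auto split: if_splits)
        define X where "X = {x \<in> {1..p}. blk w {x} \<in> S}"
        have SX: "S = (\<lambda>x. blk w {x}) ` X" using S circles0[OF hw] unfolding X_def by auto
        have "f' X \<noteq> 0" using bg E S unfolding b_def g X_def by simp
        then have cond: "int p + int (length w) - 2 * int (card X) = j" unfolding f'_def by (auto split: if_splits)
        have cS: "card S = card X" unfolding SX by (rule card_image[OF inj_sing[OF hw]])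
        have "qdeg p w g = j" unfolding qdeg_def g fst_conv snd_conv E card_circles0[OF hw] cS using cond by simp
        moreover have "g \<in> kh_gens p w" unfolding g kh_gens_def using E S by auto
        ultimately show "g \<in> kh_gens p w \<and> hdeg g = 1 - 1 \<and> qdeg p w g = j" unfolding hdeg_def g E by simp
      qed
      show "kh_d p w b = c"
      proof
        fix g' :: kh_gen
        obtain E' S' where g': "g' = (E',S')" by (cases g')
        show "kh_d p w b g' = c g'"
        proof (cases "\<exists>k<length w. E' = {k} \<and> S' \<subseteq> circles p w {k}")
          case True
          then obtain k where k: "k < length w" "E' = {k}" "S' \<subseteq> circles p w {k}" by blast
          define i where "i = w!k"
          have i: "1 \<le> i" "i < p" using wk[OF hw k(1)] i_def by auto
          have iG: "i \<in> G" using k(1) unfolding G_def i_def by blast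
          define T where "T = {x \<in> {1..p} - {Suc i}. phi w i x \<in> S'}"
          have S'T: "S' = phi w i ` T"
            unfolding T_def by (rule img_pre) (use k(3) circles1_phi[OF hw k(1)] in \<open>simp add: i_def\<close>)
          have T: "T \<subseteq> {1..p} - {Suc i}" unfolding T_def by auto
          define B where "B = {i, Suc i}"
          define R0 where "R0 = (\<lambda>x. blk w {x}) ` ({1..p} - B)"
          have CE: "circles p w {} = insert (blk w {i}) (insert (blk w {Suc i}) R0)"
          proof -
            have sp: "{1..p} = insert i (insert (Suc i) ({1..p} - B))" using i unfolding B_def by auto
            show ?thesis unfolding circles0[OF hw] R0_def by (subst sp) (simp only: image_insert)
          qed
          have CE': "circles p w {k} = insert (blk w B) R0"
            using circles1[OF hw k(1)] unfolding R0_def B_def i_def by simp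
          have d: "blk w {i} \<noteq> blk w {Suc i}" "blk w {i} \<notin> R0" "blk w {Suc i} \<notin> R0" "blk w B \<notin> R0"
            "blk w B \<noteq> blk w {i}" "blk w B \<noteq> blk w {Suc i}" unfolding R0_def B_def by auto
          have S'sub: "S' \<subseteq> insert (blk w B) R0" using k(3) CE' by simp
          have e0: "k \<notin> {}" "{k} = insert k {}" by auto
          have "kh_d p w b g' = (\<Sum>S\<in>Pow (circles p w {}). edge_coeff p w ({},S) ({k},S') * b ({},S))"
            unfolding g' k(2) by (rule kh_d_deg0[OF b0])
          also have "\<dots> = (-1) ^ card {j \<in> {}. j < k} * (if blk w B \<in> S' then b ({}, insert (blk w {i}) (S' - {blk w B}))
                + b ({}, insert (blk w {Suc i}) (S' - {blk w B})) else b ({}, S'))"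
            by (rule sum_merge[OF k(1) e0 CE CE' d S'sub])
          also have "\<dots> = mrg i (Suc i) f' T"
          proof -
            have uniq: "\<forall>x\<in>T. phi w i x = blk w B \<longleftrightarrow> x = i" unfolding phi_def B_def by auto
            have agree: "\<forall>x\<in>T - {i}. blk w {x} = phi w i x" unfolding phi_def by auto
            have nT: "Suc i \<notin> T" using T by auto
            have Tp: "T \<subseteq> {1..p}" using T by auto
            have cz: "card {j \<in> {}. j < k} = 0" by simp
            show ?thesis
            proof (cases "i \<in> T")
              case True
              have e1: "insert (blk w {i}) (phi w i ` T - {blk w B}) = (\<lambda>x. blk w {x}) ` (insert i (T - {i}))"
                by (rule img_swap[OF True uniq _ agree]) auto
              have e2: "insert (blk w {Suc i}) (phi w i ` T - {blk w B}) = (\<lambda>x. blk w {x}) ` (insert (Suc i) (T - {i}))"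
                by (rule img_swap[OF True uniq _ agree]) (use nT in auto)
              have t1: "insert i (T - {i}) = T" using True by auto
              have t2: "insert (Suc i) (T - {i}) \<subseteq> {1..p}" using Tp i by auto
              have e1': "insert (blk w {i}) (phi w i ` T - {blk w B}) = (\<lambda>x. blk w {x}) ` T"
                using e1 unfolding t1 .
              have m: "blk w B \<in> phi w i ` T" using img_mem[OF uniq] True by simp
              show ?thesis unfolding S'T
                by (simp only: cz power_0 mult_1 mrg_def if_P[OF True] if_P[OF m] e1' e2 bsing[OF Tp] bsing[OF t2])
            next
              case False
              have "phi w i ` T = (\<lambda>x. blk w {x}) ` T" using agree False by (intro img_same) auto
              then have ie: "phi w i ` T = (\<lambda>x. blk w {x}) ` T" .
              have m: "blk w B \<notin> phi w i ` T" using img_mem[OF uniq] False by simp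
              have m': "blk w B \<notin> (\<lambda>x. blk w {x}) ` T" using m ie by simp
              show ?thesis unfolding S'T
                by (simp only: cz power_0 mult_1 mrg_def if_not_P[OF False] if_not_P[OF m] if_not_P[OF m'] ie bsing[OF Tp])
            qed
          qed
          also have "\<dots> = a i T" using f'[OF iG] T by simp
          also have "\<dots> = c ({k}, phi w i ` T)" using aeq[OF k(1)] T unfolding i_def by simp
          finally show ?thesis unfolding g' k(2) S'T .
        next
          case False
          have c0: "c g' = 0"
          proof (rule ccontr)
            assume "c g' \<noteq> 0"
            then have "g' \<in> kh_gens p w" "card E' = 1" using cv g' by auto
            then obtain k where "E' = {k}" "k < length w" "S' \<subseteq> circles p w E'"
              unfolding kh_gens_def g' by (auto simp: card_Suc_eq)
            then show False using False by auto
          qed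
          have "kh_d p w b g' = 0" unfolding kh_d_def
          proof (rule sum.neutral, rule ballI)
            fix g assume g: "g \<in> kh_gens p w"
            show "edge_coeff p w g g' * b g = 0"
            proof (rule ccontr)
              assume nz: "edge_coeff p w g g' * b g \<noteq> 0"
              then have e: "edge_coeff p w g g' \<noteq> 0" and bg: "b g \<noteq> 0" by auto
              have "fst g = {}" using b0[OF bg] .
              then obtain k where "k < length w" "E' = {k}" using ec_nz[OF e] g' by auto
              moreover have "g' \<in> kh_gens p w" using ec_valid[OF g e] .
              ultimately show False using False g' unfolding kh_gens_def by auto
            qed
          qed
          then show ?thesis using c0 by simp
        qed
      qed
    qed
  qed
qed


end
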